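(* Let $\mathcal{D}=(\mathcal{P},\mathcal{B},\mathcal{I})$ be a quasi-symmetric $(v,b,r,k,\lambda_1,0)$ SPBIBD of type $(k-1,t)$ with intersection numbers $x=0$ and $y>1$, and let $\Gamma$ be its incidence graph. Then $\Gamma$ is $2$-$\mathcal{P}$-homogeneous if and only if $$k=\frac{(y-1)(r-\lambda_1)(t-1)}{\lambda_1(t-y)}+2\quad\text{and}\quad t=\frac{(k-1)\left[r(y-1)-\lambda_1(k-y-1)\right]}{\lambda_1(y-1)}.$$
   Context: A design $\mathcal{D}=(\mathcal{P},\mathcal{B},\mathcal{I})$ is an incidence structure with $|\mathcal{P}|=v$, $|\mathcal{B}|=b$, every block incident with exactly $k$ points and every point with exactly $r$ blocks; standing assumptions: $v>k$ and $r<b$. $(p,B)$ is a flag if $p\in B$, a non-flag otherwise. $\mathcal{D}$ is a $(v,b,r,k,\lambda_1,\lambda_2)$ SPBIBD of type $(s,t)$ if (i) any two distinct points are together in exactly $\lambda_1$ or exactly $\lambda_2$ blocks; (ii) for every flag $(p,B)$, the number of points of $B$ other than $p$ lying with $p$ in exactly $\lambda_1$ blocks is $s$; (iii) for every non-flag $(p,B)$, the number of points of $B$ lying with $p$ in exactly $\lambda_1$ blocks is $t$. Quasi-symmetric with intersection numbers $x<y$: any two distinct blocks share exactly $x$ or $y$ points, both values occurring. The incidence graph is the bipartite graph on $\mathcal{P}\cup\mathcal{B}$ with $p\sim B$ iff $p\in B$. $\Gamma_i(u)$ is the set of vertices at distance $i$ from $u$, $\Gamma(u)=\Gamma_1(u)$.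 For a $(Y,Y')$-bipartite graph in which every vertex of $Y$ has eccentricity $D\ge3$: it is $2$-$Y$-homogeneous if for each $1\le i\le D-1$ the number $|\Gamma(x)\cap\Gamma(y)\cap\Gamma_{i-1}(z)|$ is the same for all $x\in Y$, $y\in\Gamma_2(x)$, $z\in\Gamma_i(x)\cap\Gamma_i(y)$. *)

theory Defs
  imports Complex_Main
begin

text \<open>Points P :: 'a set, blocks Bs :: 'b set (abstract block labels, so repeated
  blocks are allowed), incidence I p B.\<close>

definition lam :: "'a set \<Rightarrow> 'b set \<Rightarrow> ('a \<Rightarrow> 'b \<Rightarrow> bool) \<Rightarrow> 'a \<Rightarrow> 'a \<Rightarrow> nat" where
  "lam P Bs I p q = card {B \<in> Bs. I p B \<and> I q B}"

definition design ::
  "'a set \<Rightarrow> 'b set \<Rightarrow> ('a \<Rightarrow> 'b \<Rightarrow> bool) \<Rightarrow> nat \<Rightarrow> nat \<Rightarrow> nat \<Rightarrow> nat \<Rightarrow> bool" where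
  "design P Bs I v b r k \<longleftrightarrow>
     finite P \<and> finite Bs \<and> card P = v \<and> card Bs = b \<and>
     (\<forall>B\<in>Bs. card {p \<in> P. I p B} = k) \<and>
     (\<forall>p\<in>P. card {B \<in> Bs. I p B} = r) \<and>
     v > k \<and> r < b"

definition spbibd ::
  "'a set \<Rightarrow> 'b set \<Rightarrow> ('a \<Rightarrow> 'b \<Rightarrow> bool) \<Rightarrow> nat \<Rightarrow> nat \<Rightarrow> nat \<Rightarrow> nat \<Rightarrow> nat \<Rightarrow> nat
     \<Rightarrow> nat \<Rightarrow> nat \<Rightarrow> bool" where
  "spbibd P Bs I v b r k l1 l2 s t \<longleftrightarrow>
     design P Bs I v b r k \<and>
     (\<forall>p\<in>P. \<forall>q\<in>P. p \<noteq> q \<longrightarrow> lam P Bs I p q = l1 \<or> lam P Bs I p q = l2) \<and>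
     (\<forall>p\<in>P. \<forall>B\<in>Bs. I p B \<longrightarrow>
        card {q \<in> P. q \<noteq> p \<and> I q B \<and> lam P Bs I p q = l1} = s) \<and>
     (\<forall>p\<in>P. \<forall>B\<in>Bs. \<not> I p B \<longrightarrow>
        card {q \<in> P. I q B \<and> lam P Bs I p q = l1} = t)"

definition quasi_symmetric ::
  "'a set \<Rightarrow> 'b set \<Rightarrow> ('a \<Rightarrow> 'b \<Rightarrow> bool) \<Rightarrow> nat \<Rightarrow> nat \<Rightarrow> bool" where
  "quasi_symmetric P Bs I x y \<longleftrightarrow>
     x < y \<and>
     (\<forall>B\<in>Bs. \<forall>C\<in>Bs. B \<noteq> C \<longrightarrow>
        card {p \<in> P. I p B \<and> I p C} = x \<or> card {p \<in> P. I p B \<and> I p C} = y) \<and>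
     (\<exists>B\<in>Bs. \<exists>C\<in>Bs. B \<noteq> C \<and> card {p \<in> P. I p B \<and> I p C} = x) \<and>
     (\<exists>B\<in>Bs. \<exists>C\<in>Bs. B \<noteq> C \<and> card {p \<in> P. I p B \<and> I p C} = y)"

definition at_dist :: "('v \<times> 'v) set \<Rightarrow> 'v \<Rightarrow> 'v \<Rightarrow> nat \<Rightarrow> bool" where
  "at_dist E u w i \<longleftrightarrow> (u, w) \<in> E ^^ i \<and> (\<forall>j<i. (u, w) \<notin> E ^^ j)"

definition Gamma :: "('v \<times> 'v) set \<Rightarrow> nat \<Rightarrow> 'v \<Rightarrow> 'v set" where
  "Gamma E i u = {w. at_dist E u w i}"

definition has_ecc :: "('v \<times> 'v) set \<Rightarrow> 'v set \<Rightarrow> 'v \<Rightarrow> nat \<Rightarrow> bool" where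
  "has_ecc E V x D \<longleftrightarrow> (\<forall>w\<in>V. \<exists>i\<le>D. at_dist E x w i) \<and> (\<exists>w\<in>V. at_dist E x w D)"

definition two_Y_homogeneous :: "('v \<times> 'v) set \<Rightarrow> 'v set \<Rightarrow> 'v set \<Rightarrow> bool" where
  "two_Y_homogeneous E V Y \<longleftrightarrow>
     (\<exists>D\<ge>3. (\<forall>x\<in>Y. has_ecc E V x D) \<and>
       (\<forall>i\<in>{1..D-1}. \<exists>c. \<forall>x\<in>Y. \<forall>y\<in>Gamma E 2 x.
          \<forall>z\<in>Gamma E i x \<inter> Gamma E i y.
            card (Gamma E 1 x \<inter> Gamma E 1 y \<inter> Gamma E (i - 1) z) = c))"

definition inc_vertices :: "'a set \<Rightarrow> 'b set \<Rightarrow> ('a + 'b) set" where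
  "inc_vertices P Bs = Inl ` P \<union> Inr ` Bs"

definition inc_edges :: "'a set \<Rightarrow> 'b set \<Rightarrow> ('a \<Rightarrow> 'b \<Rightarrow> bool) \<Rightarrow> (('a + 'b) \<times> ('a + 'b)) set" where
  "inc_edges P Bs I =
     {(Inl p, Inr B) | p B. p \<in> P \<and> B \<in> Bs \<and> I p B} \<union>
     {(Inr B, Inl p) | p B. p \<in> P \<and> B \<in> Bs \<and> I p B}"

end

theory Submission
  imports Defs
begin

lemma card_filter_sum: "finite A \<Longrightarrow> card {a\<in>A. P a} = (\<Sum>a\<in>A. if P a then 1 else 0::nat)"
  by (simp add: sum.If_cases Int_def)

lemma dc:
  assumes "finite A" "finite B"
  shows "(\<Sum>a\<in>A. card {b\<in>B. R a b}) = (\<Sum>b\<in>B. card {a\<in>A. R a b})"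
proof -
  have "(\<Sum>a\<in>A. card {b\<in>B. R a b}) = (\<Sum>a\<in>A. \<Sum>b\<in>B. if R a b then 1 else 0::nat)"
    using assms by (simp add: card_filter_sum)
  also have "\<dots> = (\<Sum>b\<in>B. \<Sum>a\<in>A. if R a b then 1 else 0::nat)" by (rule sum.swap)
  also have "\<dots> = (\<Sum>b\<in>B. card {a\<in>A. R a b})" using assms by (simp add: card_filter_sum)
  finally show ?thesis .
qed

lemma dc2:
  assumes "finite A" "finite B" "finite C"
  shows "(\<Sum>c\<in>C. card {a\<in>A. R a c} * card {b\<in>B. R b c}) = (\<Sum>a\<in>A. \<Sum>b\<in>B. card {c\<in>C. R a c \<and> R b c})"
proof -
  have m: "\<And>P Q. (if P then 1 else 0::nat) * (if Q then 1 else 0) = (if P \<and> Q then 1 else 0)" by simp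
  have pt: "\<And>c. card {a\<in>A. R a c} * card {b\<in>B. R b c} = (\<Sum>a\<in>A. \<Sum>b\<in>B. (if R a c \<and> R b c then 1 else 0::nat))"
    using assms by (simp only: card_filter_sum sum_product m)
  have "(\<Sum>c\<in>C. card {a\<in>A. R a c} * card {b\<in>B. R b c})
     = (\<Sum>c\<in>C. \<Sum>a\<in>A. \<Sum>b\<in>B. (if R a c \<and> R b c then 1 else 0::nat))"
    by (simp only: pt)
  also have "\<dots> = (\<Sum>a\<in>A. \<Sum>c\<in>C. \<Sum>b\<in>B. (if R a c \<and> R b c then 1 else 0::nat))" by (rule sum.swap)
  also have "\<dots> = (\<Sum>a\<in>A. \<Sum>b\<in>B. \<Sum>c\<in>C. (if R a c \<and> R b c then 1 else 0::nat))"
    by (intro sum.cong refl sum.swap)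
  also have "\<dots> = (\<Sum>a\<in>A. \<Sum>b\<in>B. card {c\<in>C. R a c \<and> R b c})" using assms by (simp add: card_filter_sum)
  finally show ?thesis .
qed

lemma var_const:
  fixes f :: "'x \<Rightarrow> real"
  assumes "finite S"
  shows "(\<exists>c. \<forall>z\<in>S. f z = c) \<longleftrightarrow> real (card S) * (\<Sum>z\<in>S. (f z)^2) = (\<Sum>z\<in>S. f z)^2"
proof
  assume "\<exists>c. \<forall>z\<in>S. f z = c"
  then obtain c where c: "\<forall>z\<in>S. f z = c" by blast
  then have "(\<Sum>z\<in>S. (f z)^2) = card S * c^2" "(\<Sum>z\<in>S. f z) = card S * c" by simp_all
  then show "real (card S) * (\<Sum>z\<in>S. (f z)^2) = (\<Sum>z\<in>S. f z)^2" by (simp add: power2_eq_square)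
next
  assume h: "real (card S) * (\<Sum>z\<in>S. (f z)^2) = (\<Sum>z\<in>S. f z)^2"
  have "(\<Sum>a\<in>S. \<Sum>b\<in>S. (f a - f b)^2) = (\<Sum>a\<in>S. \<Sum>b\<in>S. (f a)^2 + (f b)^2 - 2 * f a * f b)"
    by (simp add: power2_diff)
  also have "\<dots> = 2 * (real (card S) * (\<Sum>z\<in>S. (f z)^2)) - 2 * (\<Sum>z\<in>S. f z)^2"
    by (simp add: sum.distrib sum_subtractf sum_distrib_left sum_distrib_right power2_eq_square
        mult.assoc mult.commute mult.left_commute)
  finally have "(\<Sum>a\<in>S. \<Sum>b\<in>S. (f a - f b)^2) = 0" using h by simp
  then have all: "\<forall>a\<in>S. \<forall>b\<in>S. f a = f b"
  proof (intro ballI)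
    fix a b assume a: "a \<in> S" and b: "b \<in> S"
    assume h0: "(\<Sum>a\<in>S. \<Sum>b\<in>S. (f a - f b)^2) = 0"
    have "(\<Sum>b\<in>S. (f a - f b)^2) = 0"
      by (rule sum_nonneg_0[OF assms _ h0 a]) (simp add: sum_nonneg)
    then have "(f a - f b)^2 = 0"
      using sum_nonneg_0[where f="\<lambda>b. (f a - f b)^2" and s=S and i=b] assms b by simp
    then show "f a = f b" by simp
  qed
  show "\<exists>c. \<forall>z\<in>S. f z = c"
  proof (cases "S = {}")
    case True then show ?thesis by simp
  next
    case False then obtain a where "a \<in> S" by blast
    then show ?thesis using all by blast
  qed
qed

lemma var_val:
  fixes f :: "'x \<Rightarrow> real"
  assumes "finite S" "\<forall>z\<in>S. f z = c" "z \<in> S"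
  shows "f z * real (card S) = (\<Sum>z\<in>S. f z)"
  using assms by simp

lemma two_elems: assumes "2 \<le> card A" obtains a b where "a \<in> A" "b \<in> A" "a \<noteq> b"
proof -
  from assms have "A \<noteq> {}" by auto
  then obtain a where a: "a \<in> A" by blast
  from assms have fin: "finite A" using card.infinite by fastforce
  have "card (A - {a}) \<ge> 1" using assms a fin by (simp add: card_Diff_singleton)
  then have "A - {a} \<noteq> {}" by (metis card.empty not_one_le_zero)
  then obtain b where "b \<in> A - {a}" by blast
  then show ?thesis using a that by blast
qed


locale ctx =
  fixes P :: "'a set" and Bs :: "'b set" and I :: "'a \<Rightarrow> 'b \<Rightarrow> bool"
    and v b r k l t y :: nat
  assumes sp: "spbibd P Bs I v b r k l 0 (k - 1) t"
    and qs: "quasi_symmetric P Bs I 0 y"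
    and y1: "y > 1"
begin

definition blk where "blk p = {B\<in>Bs. I p B}"
definition pts where "pts B = {p\<in>P. I p B}"
definition col where "col p q \<longleftrightarrow> p \<in> P \<and> q \<in> P \<and> p \<noteq> q \<and> (\<exists>B\<in>Bs. I p B \<and> I q B)"

lemma des: "design P Bs I v b r k" using sp by (simp add: spbibd_def)
lemma finP: "finite P" using des by (simp add: design_def)
lemma finB: "finite Bs" using des by (simp add: design_def)
lemma cardP: "card P = v" using des by (simp add: design_def)
lemma cardB: "card Bs = b" using des by (simp add: design_def)
lemma vk: "v > k" using des by (simp add: design_def)
lemma rb: "r < b" using des by (simp add: design_def)
lemma card_pts: "B \<in> Bs \<Longrightarrow> card (pts B) = k" using des by (simp add: design_def pts_def)
lemma card_blk: "p \<in> P \<Longrightarrow> card (blk p) = r" using des by (simp add: design_def blk_def)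
lemma fin_pts: "finite (pts B)" using finP by (simp add: pts_def)
lemma fin_blk: "finite (blk p)" using finB by (simp add: blk_def)
lemma pts_sub: "pts B \<subseteq> P" by (auto simp: pts_def)
lemma blk_sub: "blk p \<subseteq> Bs" by (auto simp: blk_def)
lemma lam_eq: "lam P Bs I p q = card (blk p \<inter> blk q)"
  unfolding lam_def blk_def by (rule arg_cong[where f=card]) auto
lemma lamA: "\<forall>p\<in>P. \<forall>q\<in>P. p \<noteq> q \<longrightarrow> lam P Bs I p q = l \<or> lam P Bs I p q = 0"
  by (rule conjunct1[OF conjunct2[OF sp[unfolded spbibd_def]]])
lemma nfA: "\<forall>p\<in>P. \<forall>B\<in>Bs. \<not> I p B \<longrightarrow> card {q \<in> P. I q B \<and> lam P Bs I p q = l} = t"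
  by (rule conjunct2[OF conjunct2[OF conjunct2[OF sp[unfolded spbibd_def]]]])
lemma qA: "\<forall>B\<in>Bs. \<forall>C\<in>Bs. B \<noteq> C \<longrightarrow> card {p \<in> P. I p B \<and> I p C} = 0 \<or> card {p \<in> P. I p B \<and> I p C} = y"
  by (rule conjunct1[OF conjunct2[OF qs[unfolded quasi_symmetric_def]]])
lemma q0: "\<exists>B\<in>Bs. \<exists>C\<in>Bs. B \<noteq> C \<and> card {p \<in> P. I p B \<and> I p C} = 0"
  by (rule conjunct1[OF conjunct2[OF conjunct2[OF qs[unfolded quasi_symmetric_def]]]])
lemma qy: "\<exists>B\<in>Bs. \<exists>C\<in>Bs. B \<noteq> C \<and> card {p \<in> P. I p B \<and> I p C} = y"
  by (rule conjunct2[OF conjunct2[OF conjunct2[OF qs[unfolded quasi_symmetric_def]]]])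
lemma ptsI: "pts B \<inter> pts C = {p \<in> P. I p B \<and> I p C}" by (auto simp: pts_def)

lemma lam_cases: "p \<in> P \<Longrightarrow> q \<in> P \<Longrightarrow> p \<noteq> q \<Longrightarrow> card (blk p \<inter> blk q) = l \<or> card (blk p \<inter> blk q) = 0"
  using lamA[rule_format, of p q] unfolding lam_eq by simp
lemma nonflag: "p \<in> P \<Longrightarrow> B \<in> Bs \<Longrightarrow> \<not> I p B \<Longrightarrow> card {q\<in>pts B. card (blk p \<inter> blk q) = l} = t"
proof -
  assume a: "p \<in> P" "B \<in> Bs" "\<not> I p B"
  have "card {q \<in> P. I q B \<and> lam P Bs I p q = l} = t" using nfA[rule_format, OF a] .
  moreover have "{q \<in> P. I q B \<and> lam P Bs I p q = l} = {q\<in>pts B. card (blk p \<inter> blk q) = l}"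
    by (auto simp: pts_def lam_eq)
  ultimately show ?thesis by simp
qed
lemma qv: "B \<in> Bs \<Longrightarrow> C \<in> Bs \<Longrightarrow> B \<noteq> C \<Longrightarrow> card (pts B \<inter> pts C) = 0 \<or> card (pts B \<inter> pts C) = y"
  unfolding ptsI using qA[rule_format, of B C] by simp
lemma ex_y: "\<exists>B\<in>Bs. \<exists>C\<in>Bs. B \<noteq> C \<and> card (pts B \<inter> pts C) = y"
  unfolding ptsI by (rule qy)
lemma ex_0: "\<exists>B\<in>Bs. \<exists>C\<in>Bs. B \<noteq> C \<and> card (pts B \<inter> pts C) = 0"
  unfolding ptsI by (rule q0)

lemma in_pts: "p \<in> pts B \<longleftrightarrow> p \<in> P \<and> I p B" by (simp add: pts_def)
lemma in_blk: "B \<in> blk p \<longleftrightarrow> B \<in> Bs \<and> I p B" by (simp add: blk_def)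

lemma l_ge2: "l \<ge> 2"
proof -
  obtain B C where BC: "B \<in> Bs" "C \<in> Bs" "B \<noteq> C" "card (pts B \<inter> pts C) = y" using ex_y by blast
  then have "2 \<le> card (pts B \<inter> pts C)" using y1 by simp
  then obtain p q where pq: "p \<in> pts B \<inter> pts C" "q \<in> pts B \<inter> pts C" "p \<noteq> q" by (rule two_elems)
  have "{B, C} \<subseteq> blk p \<inter> blk q" using pq BC by (auto simp: pts_def blk_def)
  then have "card {B, C} \<le> card (blk p \<inter> blk q)" by (intro card_mono) (auto simp: fin_blk)
  then have c2: "2 \<le> card (blk p \<inter> blk q)" using BC by simp
  have pP: "p \<in> P" "q \<in> P" using pq by (auto simp: pts_def)
  have "card (blk p \<inter> blk q) = l \<or> card (blk p \<inter> blk q) = 0" by (rule lam_cases[OF pP pq(3)])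
  then show ?thesis using c2 by auto
qed

lemma col_sym: "col p q \<Longrightarrow> col q p" unfolding col_def by blast

lemma col_iff: "p \<in> P \<Longrightarrow> q \<in> P \<Longrightarrow> p \<noteq> q \<Longrightarrow> col p q \<longleftrightarrow> card (blk p \<inter> blk q) = l"
proof -
  assume a: "p \<in> P" "q \<in> P" "p \<noteq> q"
  show ?thesis
  proof
    assume "col p q"
    then obtain B where "B \<in> blk p \<inter> blk q" unfolding col_def blk_def by blast
    then have "card (blk p \<inter> blk q) \<noteq> 0" using fin_blk by auto
    then show "card (blk p \<inter> blk q) = l" using lam_cases[OF a] by simp
  next
    assume "card (blk p \<inter> blk q) = l"
    then have "blk p \<inter> blk q \<noteq> {}" using l_ge2 by auto
    then show "col p q" using a unfolding col_def blk_def by blast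
  qed
qed

lemma colD: "col p q \<Longrightarrow> p \<in> P \<and> q \<in> P \<and> p \<noteq> q" unfolding col_def by blast

lemma col_card: "col p q \<Longrightarrow> card (blk p \<inter> blk q) = l"
proof -
  assume c: "col p q"
  note a = colD[OF c]
  show ?thesis using col_iff[of p q] a c by simp
qed

lemma noncol_card: "p \<in> P \<Longrightarrow> q \<in> P \<Longrightarrow> p \<noteq> q \<Longrightarrow> \<not> col p q \<Longrightarrow> card (blk p \<inter> blk q) = 0"
proof -
  assume a: "p \<in> P" "q \<in> P" "p \<noteq> q" "\<not> col p q"
  have "card (blk p \<inter> blk q) \<noteq> l" using col_iff[OF a(1-3)] a(4) by simp
  then show ?thesis using lam_cases[OF a(1-3)] by simp
qed

lemma meet_y: "B \<in> Bs \<Longrightarrow> C \<in> Bs \<Longrightarrow> B \<noteq> C \<Longrightarrow> p \<in> pts B \<Longrightarrow> p \<in> pts C \<Longrightarrow> card (pts B \<inter> pts C) = y"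
proof -
  assume a: "B \<in> Bs" "C \<in> Bs" "B \<noteq> C" "p \<in> pts B" "p \<in> pts C"
  then have "card (pts B \<inter> pts C) \<noteq> 0" using fin_pts by auto
  then show ?thesis using qv[OF a(1-3)] by simp
qed

lemma y_le_k: "y \<le> k"
proof -
  obtain B C where BC: "B \<in> Bs" "C \<in> Bs" "B \<noteq> C" "card (pts B \<inter> pts C) = y" using ex_y by blast
  have "card (pts B \<inter> pts C) \<le> card (pts B)" by (intro card_mono fin_pts) auto
  then show ?thesis using BC card_pts by simp
qed

lemma ex_col: "\<exists>p q. col p q"
proof -
  obtain B C where BC: "B \<in> Bs" "C \<in> Bs" "B \<noteq> C" "card (pts B \<inter> pts C) = y" using ex_y by blast
  then have "2 \<le> card (pts B \<inter> pts C)" using y1 by simp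
  then obtain p q where pq: "p \<in> pts B \<inter> pts C" "q \<in> pts B \<inter> pts C" "p \<noteq> q" by (rule two_elems)
  then have "col p q" using BC unfolding col_def pts_def by blast
  then show ?thesis by blast
qed

lemma r_ge_l: "r \<ge> l"
proof -
  obtain p q where c: "col p q" using ex_col by blast
  then have "card (blk p \<inter> blk q) \<le> card (blk p)" by (intro card_mono fin_blk) auto
  then show ?thesis using col_card[OF c] card_blk colD[OF c] by simp
qed

end

context ctx begin

definition Cx where "Cx x = {q. col x q}"

lemma fin_Cx: "finite (Cx x)"
  by (rule finite_subset[OF _ finP]) (auto simp: Cx_def col_def)

lemma Cx_B: "x \<in> P \<Longrightarrow> B \<in> blk x \<Longrightarrow> {q\<in>Cx x. I q B} = pts B - {x}"
  by (auto simp: Cx_def col_def pts_def blk_def)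

lemma Cx_BC: "x \<in> P \<Longrightarrow> B \<in> blk x \<Longrightarrow> C \<in> blk x \<Longrightarrow> {q\<in>Cx x. I q B \<and> I q C} = pts B \<inter> pts C - {x}"
  by (auto simp: Cx_def col_def pts_def blk_def)

lemma blk_q: "{B\<in>blk x. I q B} = blk x \<inter> blk q" by (auto simp: blk_def)

lemma k_ge: "k \<ge> 2" using y_le_k y1 by simp

lemma x_in_pts: "x \<in> P \<Longrightarrow> B \<in> blk x \<Longrightarrow> x \<in> pts B" by (simp add: pts_def blk_def)

lemma card_pts_minus: "x \<in> P \<Longrightarrow> B \<in> blk x \<Longrightarrow> card (pts B - {x}) = k - 1"
  using x_in_pts card_pts fin_pts by (simp add: blk_def)

lemma Cx_count: "x \<in> P \<Longrightarrow> card (Cx x) * l = r * (k - 1)"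
proof -
  assume x: "x \<in> P"
  have "(\<Sum>q\<in>Cx x. card {B\<in>blk x. I q B}) = (\<Sum>B\<in>blk x. card {q\<in>Cx x. I q B})"
    by (rule dc[OF fin_Cx fin_blk])
  also have "\<dots> = (\<Sum>B\<in>blk x. k - 1)"
    by (rule sum.cong[OF refl]) (simp add: Cx_B[OF x] card_pts_minus[OF x])
  also have "\<dots> = r * (k - 1)" using card_blk[OF x] by simp
  finally have e: "(\<Sum>q\<in>Cx x. card {B\<in>blk x. I q B}) = r * (k - 1)" .
  have "(\<Sum>q\<in>Cx x. card {B\<in>blk x. I q B}) = (\<Sum>q\<in>Cx x. l)"
    by (rule sum.cong[OF refl]) (simp add: blk_q col_card Cx_def)
  then show ?thesis using e by simp
qed

lemma R1_nat: "x \<in> P \<Longrightarrow> card (Cx x) * l * l = r * (k - 1) + r * ((r - 1) * (y - 1))"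
proof -
  assume x: "x \<in> P"
  have "(\<Sum>q\<in>Cx x. card {B\<in>blk x. I q B} * card {C\<in>blk x. I q C})
      = (\<Sum>B\<in>blk x. \<Sum>C\<in>blk x. card {q\<in>Cx x. I q B \<and> I q C})"
    by (rule dc2[OF fin_blk fin_blk fin_Cx])
  also have "\<dots> = (\<Sum>B\<in>blk x. (k - 1) + (r - 1) * (y - 1))"
  proof (rule sum.cong[OF refl])
    fix B assume B: "B \<in> blk x"
    have "(\<Sum>C\<in>blk x. card {q\<in>Cx x. I q B \<and> I q C})
       = card {q\<in>Cx x. I q B \<and> I q B} + (\<Sum>C\<in>blk x - {B}. card {q\<in>Cx x. I q B \<and> I q C})"
      using B fin_blk by (simp add: sum.remove)
    also have "card {q\<in>Cx x. I q B \<and> I q B} = k - 1" using Cx_B[OF x B] card_pts_minus[OF x B] by simp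
    also have "(\<Sum>C\<in>blk x - {B}. card {q\<in>Cx x. I q B \<and> I q C}) = (\<Sum>C\<in>blk x - {B}. y - 1)"
    proof (rule sum.cong[OF refl])
      fix C assume C: "C \<in> blk x - {B}"
      have BC: "B \<in> Bs" "C \<in> Bs" "B \<noteq> C" using B C by (auto simp: blk_def)
      have xx: "x \<in> pts B" "x \<in> pts C" using B C x by (auto simp: blk_def pts_def)
      have "card (pts B \<inter> pts C) = y" by (rule meet_y[OF BC xx])
      moreover have "finite (pts B \<inter> pts C)" using fin_pts by simp
      ultimately have "card (pts B \<inter> pts C - {x}) = y - 1" using xx by simp
      then show "card {q\<in>Cx x. I q B \<and> I q C} = y - 1" using Cx_BC[OF x B] C by simp
    qed
    also have "\<dots> = (r - 1) * (y - 1)" using B card_blk[OF x] fin_blk by (simp add: card_Diff_singleton)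
    finally show "(\<Sum>C\<in>blk x. card {q\<in>Cx x. I q B \<and> I q C}) = (k - 1) + (r - 1) * (y - 1)" .
  qed
  also have "\<dots> = r * ((k - 1) + (r - 1) * (y - 1))" using card_blk[OF x] by simp
  finally have e: "(\<Sum>q\<in>Cx x. card {B\<in>blk x. I q B} * card {C\<in>blk x. I q C}) = r * ((k - 1) + (r - 1) * (y - 1))" .
  have "(\<Sum>q\<in>Cx x. card {B\<in>blk x. I q B} * card {C\<in>blk x. I q C}) = (\<Sum>q\<in>Cx x. l * l)"
    by (rule sum.cong[OF refl]) (simp add: blk_q col_card Cx_def)
  then show ?thesis using e by (simp add: algebra_simps)
qed

lemma P_ne: "P \<noteq> {}" using vk cardP by auto

lemma r_pos: "r > 0" using r_ge_l l_ge2 by simp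

lemma R1: "(real r - 1) * (real y - 1) = (real k - 1) * (real l - 1)"
proof -
  obtain x where x: "x \<in> P" using P_ne by blast
  have a: "real (card (Cx x)) * l = r * (real k - 1)"
    using Cx_count[OF x] k_ge by (metis of_nat_1 of_nat_diff of_nat_mult le_trans one_le_numeral)
  have b: "real (card (Cx x)) * l * l = r * (real k - 1) + r * ((real r - 1) * (real y - 1))"
  proof -
    have "real (card (Cx x) * l * l) = real (r * (k - 1) + r * ((r - 1) * (y - 1)))" using R1_nat[OF x] by simp
    then show ?thesis using k_ge r_pos y1 by (simp add: of_nat_diff)
  qed
  have "r * (real k - 1) * l = r * (real k - 1) + r * ((real r - 1) * (real y - 1))" using a b by simp
  then have "r * ((real k - 1) * (real l - 1)) = r * ((real r - 1) * (real y - 1))" by (simp add: algebra_simps)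
  then show ?thesis using r_pos by simp
qed

end

context ctx begin

lemma ex_nonblk: "x \<in> P \<Longrightarrow> \<exists>C\<in>Bs. \<not> I x C"
proof -
  assume x: "x \<in> P"
  have "card (blk x) < card Bs" using card_blk[OF x] cardB rb by simp
  then have "blk x \<noteq> Bs" by auto
  then show ?thesis using blk_sub by (auto simp: blk_def)
qed

lemma t_le_k: "t \<le> k"
proof -
  obtain x where x: "x \<in> P" using P_ne by blast
  obtain C where C: "C \<in> Bs" "\<not> I x C" using ex_nonblk[OF x] by blast
  note nI = C(2)
  have "card {q\<in>pts C. card (blk x \<inter> blk q) = l} \<le> card (pts C)" by (intro card_mono fin_pts) auto
  then show ?thesis using nonflag[OF x C(1) nI] card_pts[OF C(1)] by simp
qed

lemma y_lt_k: "t \<ge> 1 \<Longrightarrow> y < k"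
proof -
  assume t1: "t \<ge> 1"
  obtain x where x: "x \<in> P" using P_ne by blast
  obtain C where C: "C \<in> Bs" "\<not> I x C" using ex_nonblk[OF x] by blast
  have "card {q\<in>pts C. card (blk x \<inter> blk q) = l} \<noteq> 0" using nonflag[OF x C] t1 by simp
  then have "{q\<in>pts C. card (blk x \<inter> blk q) = l} \<noteq> {}" by (metis card.empty)
  then obtain q where q: "q \<in> pts C" "card (blk x \<inter> blk q) = l" by blast
  then have "blk x \<inter> blk q \<noteq> {}" using l_ge2 by auto
  then obtain B where B: "B \<in> blk x" "B \<in> blk q" by blast
  have BC: "B \<in> Bs" "B \<noteq> C" using B C by (auto simp: blk_def)
  have qB: "q \<in> pts B" using B q by (auto simp: blk_def pts_def)
  have cy: "card (pts B \<inter> pts C) = y" by (rule meet_y[OF BC(1) C(1) BC(2) qB q(1)])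
  show ?thesis
  proof (rule ccontr)
    assume "\<not> y < k"
    then have "card (pts B \<inter> pts C) = card (pts B)" using cy y_le_k card_pts[OF BC(1)] by simp
    then have "pts B \<inter> pts C = pts B" using fin_pts by (metis card_subset_eq inf_le1)
    moreover have "x \<in> pts B" using B x by (simp add: blk_def pts_def)
    ultimately have "x \<in> pts C" by blast
    then show False using C by (simp add: pts_def)
  qed
qed

lemma blk_minus: "x \<in> P \<Longrightarrow> q \<in> P \<Longrightarrow> card (blk q - blk x) = r - card (blk x \<inter> blk q)"
proof -
  assume "x \<in> P" "q \<in> P"
  have "card (blk q - blk x) = card (blk q) - card (blk q \<inter> blk x)" by (rule card_Diff_subset_Int) (simp add: fin_blk)
  moreover have "blk q \<inter> blk x = blk x \<inter> blk q" by blast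
  ultimately show ?thesis using card_blk[OF \<open>q \<in> P\<close>] by simp
qed

lemma b_rel_nat: "x \<in> P \<Longrightarrow> card (Cx x) * (r - l) = (b - r) * t"
proof -
  assume x: "x \<in> P"
  have "(\<Sum>q\<in>Cx x. card {C\<in>Bs - blk x. I q C}) = (\<Sum>C\<in>Bs - blk x. card {q\<in>Cx x. I q C})"
    by (rule dc[OF fin_Cx]) (simp add: finB)
  also have "\<dots> = (\<Sum>C\<in>Bs - blk x. t)"
  proof (rule sum.cong[OF refl])
    fix C assume C: "C \<in> Bs - blk x"
    then have C': "C \<in> Bs" "\<not> I x C" by (auto simp: blk_def)
    have "{q\<in>Cx x. I q C} = {q\<in>pts C. card (blk x \<inter> blk q) = l}"
    proof (intro set_eqI iffI)
      fix q assume "q \<in> {q\<in>Cx x. I q C}"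
      then show "q \<in> {q\<in>pts C. card (blk x \<inter> blk q) = l}" using col_card by (auto simp: Cx_def pts_def col_def)
    next
      fix q assume q: "q \<in> {q\<in>pts C. card (blk x \<inter> blk q) = l}"
      then have qP: "q \<in> P" "I q C" by (auto simp: pts_def)
      have "q \<noteq> x" using qP C' by auto
      then have "col x q" using col_iff[OF x qP(1)] q by simp
      then show "q \<in> {q\<in>Cx x. I q C}" using qP by (simp add: Cx_def)
    qed
    then show "card {q\<in>Cx x. I q C} = t" using nonflag[OF x C'] by simp
  qed
  also have "\<dots> = (b - r) * t" using card_blk[OF x] cardB blk_sub fin_blk by (simp add: card_Diff_subset)
  finally have e: "(\<Sum>q\<in>Cx x. card {C\<in>Bs - blk x. I q C}) = (b - r) * t" .
  have "(\<Sum>q\<in>Cx x. card {C\<in>Bs - blk x. I q C}) = (\<Sum>q\<in>Cx x. r - l)"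
  proof (rule sum.cong[OF refl])
    fix q assume "q \<in> Cx x"
    then have c: "col x q" by (simp add: Cx_def)
    have "{C\<in>Bs - blk x. I q C} = blk q - blk x" by (auto simp: blk_def)
    then show "card {C\<in>Bs - blk x. I q C} = r - l" using blk_minus[OF x] colD[OF c] col_card[OF c] by simp
  qed
  then show ?thesis using e by simp
qed

lemma b_rel: "real l * real t * (real b - real r) = real r * (real k - 1) * (real r - real l)"
proof -
  obtain x where x: "x \<in> P" using P_ne by blast
  have a: "real (card (Cx x)) * l = r * (real k - 1)"
  proof -
    have "real (card (Cx x) * l) = real (r * (k - 1))" using Cx_count[OF x] by simp
    moreover have "(1::nat) \<le> k" using k_ge by simp
    ultimately show ?thesis by (simp only: of_nat_mult of_nat_diff of_nat_1)
  qed
  have "real (card (Cx x) * (r - l)) = real ((b - r) * t)" using b_rel_nat[OF x] by simp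
  moreover have "real (card (Cx x) * (r - l)) = real (card (Cx x)) * (real r - real l)"
    by (simp only: of_nat_mult of_nat_diff[OF r_ge_l])
  moreover have "real ((b - r) * t) = (real b - real r) * real t"
    using rb by (simp only: of_nat_mult of_nat_diff[OF less_imp_le[OF rb]])
  ultimately have c: "real (card (Cx x)) * (real r - real l) = (real b - real r) * t" by simp
  have "real l * real t * (real b - real r) = real l * (real (card (Cx x)) * (real r - real l))" using c by simp
  also have "\<dots> = (real (card (Cx x)) * l) * (real r - real l)" by (simp add: algebra_simps)
  also have "\<dots> = real r * (real k - 1) * (real r - real l)" by (simp only: a)
  finally show ?thesis .
qed

lemma r_gt_l: "t \<ge> 1 \<Longrightarrow> r > l"
proof -
  assume t1: "t \<ge> 1"
  have "real k > real y" using y_lt_k[OF t1] by simp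
  then have "(real k - 1) * (real l - 1) > (real y - 1) * (real l - 1)" using l_ge2 by (intro mult_strict_right_mono) auto
  then have "(real r - 1) * (real y - 1) > (real l - 1) * (real y - 1)" using R1 by (simp add: mult.commute)
  then have "real r - 1 > real l - 1" using y1 by (simp add: mult_less_cancel_right)
  then show ?thesis by simp
qed

lemma caseA_col: "t = k \<Longrightarrow> x \<in> P \<Longrightarrow> q \<in> P \<Longrightarrow> q \<noteq> x \<Longrightarrow> col x q"
proof -
  assume tk: "t = k" and x: "x \<in> P" and q: "q \<in> P" "q \<noteq> x"
  have t1: "t \<ge> 1" using tk k_ge by simp
  have "card (blk q - blk x) > 0"
  proof -
    have "card (blk x \<inter> blk q) \<le> l" using lam_cases[OF x q(1) q(2)[symmetric]] by auto
    then show ?thesis using blk_minus[OF x q(1)] r_gt_l[OF t1] by simp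
  qed
  then obtain C where C: "C \<in> blk q" "C \<notin> blk x" by (metis card.empty Diff_iff ex_in_conv less_irrefl)
  then have C': "C \<in> Bs" "\<not> I x C" "I q C" by (auto simp: blk_def)
  have S: "{q\<in>pts C. card (blk x \<inter> blk q) = l} \<subseteq> pts C" by auto
  have "card {q\<in>pts C. card (blk x \<inter> blk q) = l} = card (pts C)" using nonflag[OF x C'(1,2)] card_pts[OF C'(1)] tk by simp
  then have "{q\<in>pts C. card (blk x \<inter> blk q) = l} = pts C" using S fin_pts by (metis card_subset_eq)
  moreover have "q \<in> pts C" using q C' by (simp add: pts_def)
  ultimately have "card (blk x \<inter> blk q) = l" by blast
  then show "col x q" using col_iff[OF x q(1) q(2)[symmetric]] by simp
qed

lemma caseB_ncol: "t < k \<Longrightarrow> x \<in> P \<Longrightarrow> \<exists>q\<in>P. q \<noteq> x \<and> \<not> col x q"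
proof -
  assume tk: "t < k" and x: "x \<in> P"
  obtain C where C: "C \<in> Bs" "\<not> I x C" using ex_nonblk[OF x] by blast
  have S: "{q\<in>pts C. card (blk x \<inter> blk q) = l} \<subseteq> pts C" by auto
  have "card {q\<in>pts C. card (blk x \<inter> blk q) = l} < card (pts C)" using nonflag[OF x C] card_pts[OF C(1)] tk by simp
  then have "{q\<in>pts C. card (blk x \<inter> blk q) = l} \<noteq> pts C" by auto
  then obtain q where q: "q \<in> pts C" "card (blk x \<inter> blk q) \<noteq> l" using S by blast
  have qP: "q \<in> P" using q by (simp add: pts_def)
  have qx: "q \<noteq> x" using q C by (auto simp: pts_def)
  have "\<not> col x q" using col_card q(2) by blast
  then show ?thesis using qP qx by blast
qed

end

lemma all_less1: "(\<forall>j<(1::nat). Q j) \<longleftrightarrow> Q 0" by auto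
lemma all_less2: "(\<forall>j<(2::nat). Q j) \<longleftrightarrow> Q 0 \<and> Q 1" by (auto simp: numeral_2_eq_2 less_Suc_eq)
lemma all_less3: "(\<forall>j<(3::nat). Q j) \<longleftrightarrow> Q 0 \<and> Q 1 \<and> Q 2" by (auto simp: numeral_3_eq_3 numeral_2_eq_2 less_Suc_eq)
lemma all_less4: "(\<forall>j<(4::nat). Q j) \<longleftrightarrow> Q 0 \<and> Q 1 \<and> Q 2 \<and> Q 3"
proof -
  have "(4::nat) = Suc 3" by simp
  then show ?thesis using all_less3[of Q] by (simp only: less_Suc_eq) auto
qed

context ctx begin

abbreviation "E \<equiv> inc_edges P Bs I"
abbreviation "V \<equiv> inc_vertices P Bs"

lemma edge_l: "(Inl p, w) \<in> E \<longleftrightarrow> p \<in> P \<and> (\<exists>B. w = Inr B \<and> B \<in> Bs \<and> I p B)"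
  by (auto simp: inc_edges_def)
lemma edge_r: "(Inr B, w) \<in> E \<longleftrightarrow> B \<in> Bs \<and> (\<exists>p. w = Inl p \<and> p \<in> P \<and> I p B)"
  by (auto simp: inc_edges_def)
lemma rp0: "(u, w) \<in> E ^^ 0 \<longleftrightarrow> w = u" by auto
lemma rpS: "(u, w) \<in> E ^^ (Suc n) \<longleftrightarrow> (\<exists>m. (u, m) \<in> E ^^ n \<and> (m, w) \<in> E)"
  by (auto intro: relpow_Suc_I elim: relpow_Suc_E)

lemma E2: "E ^^ 2 = E O E" by (simp add: numeral_2_eq_2)
lemma rp2: "(u, w) \<in> E ^^ 2 \<longleftrightarrow> (\<exists>m. (u, m) \<in> E \<and> (m, w) \<in> E)" unfolding E2 by blast

lemma blk_ne: "p \<in> P \<Longrightarrow> \<exists>B. B \<in> blk p"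
proof -
  assume "p \<in> P"
  then have "card (blk p) > 0" using card_blk r_pos by simp
  then show ?thesis by (metis card.empty ex_in_conv less_irrefl)
qed

lemma R1p: "x \<in> P \<Longrightarrow> (Inl x, w) \<in> E ^^ 1 \<longleftrightarrow> (\<exists>B\<in>blk x. w = Inr B)"
  by (auto simp: edge_l blk_def)

lemma R2p: "x \<in> P \<Longrightarrow> (Inl x, w) \<in> E ^^ 2 \<longleftrightarrow> (\<exists>q. w = Inl q \<and> (q = x \<or> col x q))"
proof -
  assume x: "x \<in> P"
  have "(Inl x, w) \<in> E ^^ 2 \<longleftrightarrow> (\<exists>m. (Inl x, m) \<in> E ^^ 1 \<and> (m, w) \<in> E)"
    using rpS[of "Inl x" w 1] by (simp add: numeral_2_eq_2)
  also have "\<dots> \<longleftrightarrow> (\<exists>B\<in>blk x. (Inr B, w) \<in> E)" using R1p[OF x] by auto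
  also have "\<dots> \<longleftrightarrow> (\<exists>q. w = Inl q \<and> (q = x \<or> col x q))"
  proof
    assume "\<exists>B\<in>blk x. (Inr B, w) \<in> E"
    then obtain B p where B: "B \<in> blk x" "w = Inl p" "p \<in> P" "I p B" by (auto simp: edge_r)
    then have "p = x \<or> col x p" using x by (auto simp: col_def blk_def)
    then show "\<exists>q. w = Inl q \<and> (q = x \<or> col x q)" using B by blast
  next
    assume "\<exists>q. w = Inl q \<and> (q = x \<or> col x q)"
    then obtain q where q: "w = Inl q" "q = x \<or> col x q" by blast
    show "\<exists>B\<in>blk x. (Inr B, w) \<in> E"
    proof (cases "q = x")
      case True
      obtain B where "B \<in> blk x" using blk_ne[OF x] by blast
      then show ?thesis using True q x by (auto simp: edge_r blk_def)
    next
      case False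
      then have c: "col x q" using q by simp
      then obtain B where "B \<in> Bs" "I x B" "I q B" "q \<in> P" by (auto simp: col_def)
      then show ?thesis using q by (auto simp: edge_r blk_def)
    qed
  qed
  finally show ?thesis .
qed

lemma R3p: "t \<ge> 1 \<Longrightarrow> x \<in> P \<Longrightarrow> (Inl x, w) \<in> E ^^ 3 \<longleftrightarrow> (\<exists>C\<in>Bs. w = Inr C)"
proof -
  assume t1: "t \<ge> 1" and x: "x \<in> P"
  have "(Inl x, w) \<in> E ^^ 3 \<longleftrightarrow> (\<exists>m. (Inl x, m) \<in> E ^^ 2 \<and> (m, w) \<in> E)"
    using rpS[of "Inl x" w 2] by (simp add: numeral_3_eq_3 numeral_2_eq_2)
  also have "\<dots> \<longleftrightarrow> (\<exists>q. (q = x \<or> col x q) \<and> (Inl q, w) \<in> E)" using R2p[OF x] by auto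
  also have "\<dots> \<longleftrightarrow> (\<exists>C\<in>Bs. w = Inr C)"
  proof
    assume "\<exists>q. (q = x \<or> col x q) \<and> (Inl q, w) \<in> E"
    then show "\<exists>C\<in>Bs. w = Inr C" by (auto simp: edge_l)
  next
    assume "\<exists>C\<in>Bs. w = Inr C"
    then obtain C where C: "C \<in> Bs" "w = Inr C" by blast
    show "\<exists>q. (q = x \<or> col x q) \<and> (Inl q, w) \<in> E"
    proof (cases "I x C")
      case True then show ?thesis using C x by (auto simp: edge_l)
    next
      case False
      have "card {q\<in>pts C. card (blk x \<inter> blk q) = l} \<noteq> 0" using nonflag[OF x C(1) False] t1 by simp
      then have "{q\<in>pts C. card (blk x \<inter> blk q) = l} \<noteq> {}" by (metis card.empty)
      then obtain q where q: "q \<in> pts C" "card (blk x \<inter> blk q) = l" by blast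
      have qP: "q \<in> P" "I q C" using q by (auto simp: pts_def)
      have "q \<noteq> x" using qP False by auto
      then have "col x q" using col_iff[OF x qP(1)] q by simp
      then show ?thesis using qP C by (auto simp: edge_l)
    qed
  qed
  finally show ?thesis .
qed

lemma R4p: "t \<ge> 1 \<Longrightarrow> x \<in> P \<Longrightarrow> (Inl x, w) \<in> E ^^ 4 \<longleftrightarrow> (\<exists>q\<in>P. w = Inl q)"
proof -
  assume t1: "t \<ge> 1" and x: "x \<in> P"
  have "(Inl x, w) \<in> E ^^ 4 \<longleftrightarrow> (\<exists>m. (Inl x, m) \<in> E ^^ 3 \<and> (m, w) \<in> E)"
    using rpS[of "Inl x" w 3] by simp
  also have "\<dots> \<longleftrightarrow> (\<exists>C\<in>Bs. (Inr C, w) \<in> E)" using R3p[OF t1 x] by auto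
  also have "\<dots> \<longleftrightarrow> (\<exists>q\<in>P. w = Inl q)"
  proof
    assume "\<exists>C\<in>Bs. (Inr C, w) \<in> E" then show "\<exists>q\<in>P. w = Inl q" by (auto simp: edge_r)
  next
    assume "\<exists>q\<in>P. w = Inl q"
    then obtain q where q: "q \<in> P" "w = Inl q" by blast
    obtain C where "C \<in> blk q" using blk_ne[OF q(1)] by blast
    then show "\<exists>C\<in>Bs. (Inr C, w) \<in> E" using q by (auto simp: edge_r blk_def)
  qed
  finally show ?thesis .
qed

lemma Gamma_eq: "w \<in> Gamma E i u \<longleftrightarrow> (u, w) \<in> E ^^ i \<and> (\<forall>j<i. (u, w) \<notin> E ^^ j)"
  by (simp add: Gamma_def at_dist_def)

lemma G0: "Gamma E 0 u = {u}" by (auto simp: Gamma_eq)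

lemma G1p: "x \<in> P \<Longrightarrow> Gamma E 1 (Inl x) = Inr ` blk x"
  by (auto simp: Gamma_eq edge_l blk_def)

lemma G2p: "x \<in> P \<Longrightarrow> Gamma E 2 (Inl x) = Inl ` {q. col x q}"
proof -
  assume x: "x \<in> P"
  show ?thesis
  proof (intro set_eqI iffI)
    fix w assume "w \<in> Gamma E 2 (Inl x)"
    then have a: "(Inl x, w) \<in> E ^^ 2" "(Inl x, w) \<notin> E ^^ 0" unfolding Gamma_eq all_less2 by auto
    then obtain q where "w = Inl q" "q = x \<or> col x q" using R2p[OF x] by blast
    then show "w \<in> Inl ` {q. col x q}" using a(2) by auto
  next
    fix w :: "'a + 'b" assume "w \<in> Inl ` {q. col x q}"
    then obtain q where q: "w = Inl q" "col x q" by blast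
    then have "q \<noteq> x" by (auto simp: col_def)
    then show "w \<in> Gamma E 2 (Inl x)" unfolding Gamma_eq all_less2 using R2p[OF x] R1p[OF x] q by auto
  qed
qed

lemma G3p: "t \<ge> 1 \<Longrightarrow> x \<in> P \<Longrightarrow> Gamma E 3 (Inl x) = Inr ` {C\<in>Bs. \<not> I x C}"
proof -
  assume t1: "t \<ge> 1" and x: "x \<in> P"
  show ?thesis
  proof (intro set_eqI iffI)
    fix w assume "w \<in> Gamma E 3 (Inl x)"
    then have a: "(Inl x, w) \<in> E ^^ 3" "(Inl x, w) \<notin> E ^^ 1" unfolding Gamma_eq all_less3 by auto
    then obtain C where "C \<in> Bs" "w = Inr C" using R3p[OF t1 x] by blast
    then show "w \<in> Inr ` {C\<in>Bs. \<not> I x C}" using a(2) R1p[OF x] by (auto simp: blk_def)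
  next
    fix w :: "'a + 'b" assume "w \<in> Inr ` {C\<in>Bs. \<not> I x C}"
    then obtain C where C: "w = Inr C" "C \<in> Bs" "\<not> I x C" by blast
    then show "w \<in> Gamma E 3 (Inl x)" unfolding Gamma_eq all_less3
      using R3p[OF t1 x] R2p[OF x] R1p[OF x] by (auto simp: blk_def)
  qed
qed

lemma G2b: "z \<in> Bs \<Longrightarrow> Gamma E 2 (Inr z) = Inr ` {C\<in>Bs. C \<noteq> z \<and> (\<exists>p\<in>pts z. I p C)}"
proof -
  assume z: "z \<in> Bs"
  have e1: "(Inr z, w) \<in> E ^^ 1 \<longleftrightarrow> (\<exists>p\<in>pts z. w = Inl p)" for w
    unfolding relpow_1 inc_edges_def pts_def using z by blast
  have e2: "(Inr z, w) \<in> E ^^ 2 \<longleftrightarrow> (\<exists>p\<in>pts z. \<exists>C\<in>Bs. I p C \<and> w = Inr C)" for w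
  proof -
    have "(Inr z, w) \<in> E ^^ 2 \<longleftrightarrow> (\<exists>m. (Inr z, m) \<in> E \<and> (m, w) \<in> E)" by (rule rp2)
    also have "\<dots> \<longleftrightarrow> (\<exists>p\<in>pts z. \<exists>C\<in>Bs. I p C \<and> w = Inr C)"
      unfolding inc_edges_def pts_def using z by blast
    finally show ?thesis .
  qed
  show ?thesis
  proof (intro set_eqI iffI)
    fix w assume "w \<in> Gamma E 2 (Inr z)"
    then have a: "(Inr z, w) \<in> E ^^ 2" "(Inr z, w) \<notin> E ^^ 0" unfolding Gamma_eq all_less2 by auto
    then obtain p C where "p \<in> pts z" "C \<in> Bs" "I p C" "w = Inr C" using e2 by blast
    then show "w \<in> Inr ` {C\<in>Bs. C \<noteq> z \<and> (\<exists>p\<in>pts z. I p C)}" using a(2) by auto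
  next
    fix w :: "'a + 'b" assume "w \<in> Inr ` {C\<in>Bs. C \<noteq> z \<and> (\<exists>p\<in>pts z. I p C)}"
    then obtain C p where C: "w = Inr C" "C \<in> Bs" "C \<noteq> z" "p \<in> pts z" "I p C" by blast
    have "(Inr z, w) \<in> E ^^ 2" using e2 C by blast
    moreover have "(Inr z, w) \<notin> E ^^ 0" using C by simp
    moreover have "(Inr z, w) \<notin> E ^^ 1" using e1 C by blast
    ultimately show "w \<in> Gamma E 2 (Inr z)" unfolding Gamma_eq all_less2 by blast
  qed
qed

lemma ad_unique: "at_dist E u w i \<Longrightarrow> at_dist E u w j \<Longrightarrow> i = j"
  unfolding at_dist_def by (metis linorder_neqE_nat)

lemma ecc_unique: "has_ecc E V u D \<Longrightarrow> has_ecc E V u D' \<Longrightarrow> D = D'"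
proof -
  assume a: "has_ecc E V u D" and b: "has_ecc E V u D'"
  obtain w where w: "w \<in> V" "at_dist E u w D" using a unfolding has_ecc_def by blast
  obtain i where i: "i \<le> D'" "at_dist E u w i" using b w(1) unfolding has_ecc_def by blast
  obtain w' where w': "w' \<in> V" "at_dist E u w' D'" using b unfolding has_ecc_def by blast
  obtain i' where i': "i' \<le> D" "at_dist E u w' i'" using a w'(1) unfolding has_ecc_def by blast
  have "D = i" using ad_unique w(2) i(2) by blast
  moreover have "D' = i'" using ad_unique w'(2) i'(2) by blast
  ultimately show ?thesis using i(1) i'(1) by simp
qed

lemma V_cases: "w \<in> V \<Longrightarrow> (\<exists>q\<in>P. w = Inl q) \<or> (\<exists>C\<in>Bs. w = Inr C)"
  by (auto simp: inc_vertices_def)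

lemma ad_gamma: "at_dist E u w i \<longleftrightarrow> w \<in> Gamma E i u" by (simp add: Gamma_def)

lemma ecc3: "t = k \<Longrightarrow> x \<in> P \<Longrightarrow> has_ecc E V (Inl x) 3"
proof -
  assume tk: "t = k" and x: "x \<in> P"
  have t1: "t \<ge> 1" using tk k_ge by simp
  show ?thesis unfolding has_ecc_def ad_gamma
  proof (intro conjI ballI)
    fix w assume "w \<in> V"
    then consider (a) q where "q \<in> P" "w = Inl q" | (b) C where "C \<in> Bs" "w = Inr C" using V_cases by blast
    then show "\<exists>i\<le>3. w \<in> Gamma E i (Inl x)"
    proof cases
      case (a q)
      show ?thesis
      proof (cases "q = x")
        case True then show ?thesis using a by (intro exI[of _ 0]) (simp add: G0)
      next
        case False then have "col x q" using caseA_col[OF tk x a(1)] by simp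
        then show ?thesis using a G2p[OF x] by (intro exI[of _ 2]) auto
      qed
    next
      case (b C)
      show ?thesis
      proof (cases "I x C")
        case True then show ?thesis using b G1p[OF x] by (intro exI[of _ 1]) (auto simp: blk_def)
      next
        case False then show ?thesis using b G3p[OF t1 x] by (intro exI[of _ 3]) auto
      qed
    qed
  next
    obtain C where C: "C \<in> Bs" "\<not> I x C" using ex_nonblk[OF x] by blast
    then show "\<exists>w\<in>V. w \<in> Gamma E 3 (Inl x)" using G3p[OF t1 x]
      by (intro bexI[of _ "Inr C"]) (auto simp: inc_vertices_def)
  qed
qed

lemma G4p: "t \<ge> 1 \<Longrightarrow> x \<in> P \<Longrightarrow> Gamma E 4 (Inl x) = Inl ` {q\<in>P. q \<noteq> x \<and> \<not> col x q}"
proof -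
  assume t1: "t \<ge> 1" and x: "x \<in> P"
  show ?thesis
  proof (intro set_eqI iffI)
    fix w assume "w \<in> Gamma E 4 (Inl x)"
    then have a: "(Inl x, w) \<in> E ^^ 4" "(Inl x, w) \<notin> E ^^ 0" "(Inl x, w) \<notin> E ^^ 2" unfolding Gamma_eq all_less4 by auto
    then obtain q where q: "q \<in> P" "w = Inl q" using R4p[OF t1 x] by blast
    then show "w \<in> Inl ` {q\<in>P. q \<noteq> x \<and> \<not> col x q}" using a(2,3) R2p[OF x] by auto
  next
    fix w :: "'a + 'b" assume "w \<in> Inl ` {q\<in>P. q \<noteq> x \<and> \<not> col x q}"
    then obtain q where q: "w = Inl q" "q \<in> P" "q \<noteq> x" "\<not> col x q" by blast
    then show "w \<in> Gamma E 4 (Inl x)" unfolding Gamma_eq all_less4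
      using R4p[OF t1 x] R3p[OF t1 x] R2p[OF x] R1p[OF x] by auto
  qed
qed

lemma ecc4: "1 \<le> t \<Longrightarrow> t < k \<Longrightarrow> x \<in> P \<Longrightarrow> has_ecc E V (Inl x) 4"
proof -
  assume t1: "1 \<le> t" and tk: "t < k" and x: "x \<in> P"
  show ?thesis unfolding has_ecc_def ad_gamma
  proof (intro conjI ballI)
    fix w assume "w \<in> V"
    then consider (a) q where "q \<in> P" "w = Inl q" | (b) C where "C \<in> Bs" "w = Inr C" using V_cases by blast
    then show "\<exists>i\<le>4. w \<in> Gamma E i (Inl x)"
    proof cases
      case (a q)
      show ?thesis
      proof (cases "q = x")
        case True then show ?thesis using a by (intro exI[of _ 0]) (simp add: G0)
      next
        case False
        show ?thesis
        proof (cases "col x q")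
          case True then show ?thesis using a G2p[OF x] by (intro exI[of _ 2]) auto
        next
          case nc: False then show ?thesis using a False G4p[OF t1 x] by (intro exI[of _ 4]) auto
        qed
      qed
    next
      case (b C)
      show ?thesis
      proof (cases "I x C")
        case True then show ?thesis using b G1p[OF x] by (intro exI[of _ 1]) (auto simp: blk_def)
      next
        case False then show ?thesis using b G3p[OF t1 x] by (intro exI[of _ 3]) auto
      qed
    qed
  next
    obtain q where q: "q \<in> P" "q \<noteq> x" "\<not> col x q" using caseB_ncol[OF tk x] by blast
    then show "\<exists>w\<in>V. w \<in> Gamma E 4 (Inl x)" using G4p[OF t1 x]
      by (intro bexI[of _ "Inl q"]) (auto simp: inc_vertices_def)
  qed
qed

lemma disconn: "t = 0 \<Longrightarrow> x \<in> P \<Longrightarrow> \<not> has_ecc E V (Inl x) D"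
proof
  assume t0: "t = 0" and x: "x \<in> P" and h: "has_ecc E V (Inl x) D"
  define S where "S = Inl ` {q. q = x \<or> col x q} \<union> Inr ` blk x"
  have step: "w' \<in> S" if w: "w \<in> S" and e: "(w, w') \<in> E" for w w'
  proof -
    from w consider (a) q where "w = Inl q" "q = x \<or> col x q" | (b) B where "w = Inr B" "B \<in> blk x"
      unfolding S_def by blast
    then show ?thesis
    proof cases
      case (a q)
      then obtain C where C: "w' = Inr C" "C \<in> Bs" "I q C" "q \<in> P" using e by (auto simp: edge_l)
      have "I x C"
      proof (rule ccontr)
        assume nI: "\<not> I x C"
        then have qx: "q \<noteq> x" using C by auto
        then have "col x q" using a by simp
        then have "card (blk x \<inter> blk q) = l" by (rule col_card)
        moreover have "q \<in> pts C" using C by (simp add: pts_def)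
        ultimately have "q \<in> {q\<in>pts C. card (blk x \<inter> blk q) = l}" by simp
        moreover have "card {q\<in>pts C. card (blk x \<inter> blk q) = l} = 0" using nonflag[OF x C(2) nI] t0 by simp
        moreover have "finite {q\<in>pts C. card (blk x \<inter> blk q) = l}" by (rule finite_subset[OF _ fin_pts]) auto
        ultimately show False by (simp only: card_0_eq) blast
      qed
      then show ?thesis using C unfolding S_def by (auto simp: blk_def)
    next
      case (b B)
      then obtain p where p: "w' = Inl p" "p \<in> P" "I p B" using e by (auto simp: edge_r)
      have "p = x \<or> col x p" using p b x by (auto simp: col_def blk_def)
      then show ?thesis using p unfolding S_def by blast
    qed
  qed
  have reach: "(Inl x, w) \<in> E ^^ n \<Longrightarrow> w \<in> S" for n w
  proof (induction n arbitrary: w)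
    case 0 then show ?case unfolding S_def by auto
  next
    case (Suc n)
    then obtain m where "(Inl x, m) \<in> E ^^ n" "(m, w) \<in> E" using rpS by blast
    then show ?case using Suc.IH step by blast
  qed
  obtain C where C: "C \<in> Bs" "\<not> I x C" using ex_nonblk[OF x] by blast
  have "Inr C \<in> V" using C by (simp add: inc_vertices_def)
  then obtain i where "at_dist E (Inl x) (Inr C) i" using h unfolding has_ecc_def by blast
  then have "Inr C \<in> S" using reach unfolding at_dist_def by blast
  then show False using C unfolding S_def by (auto simp: blk_def)
qed

end

lemma ex_nat_real:
  "(\<exists>c::nat. \<forall>z\<in>S. f z = c) \<longleftrightarrow> (\<exists>c::real. \<forall>z\<in>S. real (f z) = c)"
proof
  assume "\<exists>c::nat. \<forall>z\<in>S. f z = c" then show "\<exists>c::real. \<forall>z\<in>S. real (f z) = c" by auto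
next
  assume h: "\<exists>c::real. \<forall>z\<in>S. real (f z) = c"
  show "\<exists>c::nat. \<forall>z\<in>S. f z = c"
  proof (cases "S = {}")
    case True then show ?thesis by simp
  next
    case False
    then obtain z0 where z0: "z0 \<in> S" by blast
    from h obtain c where c: "\<forall>z\<in>S. real (f z) = c" by blast
    have "\<forall>z\<in>S. f z = f z0" using c z0 by (metis of_nat_eq_iff)
    then show ?thesis by blast
  qed
qed

lemma nat_of_real_val: "real v = c \<Longrightarrow> v = nat \<lfloor>c\<rfloor>" by auto

context ctx begin

definition Lb where "Lb x w = blk x \<inter> blk w"
definition Nb where "Nb x w = {z. col x z \<and> col w z}"

lemma fin_Nb: "finite (Nb x w)"
  by (rule finite_subset[OF _ finP]) (auto simp: Nb_def col_def)
lemma fin_Lb: "finite (Lb x w)" by (simp add: Lb_def fin_blk)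
lemma card_Lb: "col x w \<Longrightarrow> card (Lb x w) = l" unfolding Lb_def by (rule col_card)
lemma Lb_D: "B \<in> Lb x w \<Longrightarrow> col x w \<Longrightarrow> B \<in> Bs \<and> x \<in> pts B \<and> w \<in> pts B"
  by (auto simp: Lb_def blk_def pts_def col_def)

lemma Nb_B: "col x w \<Longrightarrow> B \<in> Lb x w \<Longrightarrow> {z\<in>Nb x w. I z B} = pts B - {x, w}"
  by (auto simp: Nb_def Lb_def col_def pts_def blk_def)

lemma card_pts2: "col x w \<Longrightarrow> B \<in> Lb x w \<Longrightarrow> card (pts B - {x, w}) = k - 2"
proof -
  assume c: "col x w" and B: "B \<in> Lb x w"
  note d = Lb_D[OF B c]
  have "card (pts B - {x, w}) = card (pts B) - card {x, w}"
    using d fin_pts by (intro card_Diff_subset) auto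
  moreover have "card {x, w} = 2" using colD[OF c] by simp
  ultimately show ?thesis using card_pts d by simp
qed

lemma Nb_BC: "col x w \<Longrightarrow> B \<in> Lb x w \<Longrightarrow> C \<in> Lb x w \<Longrightarrow> {z\<in>Nb x w. I z B \<and> I z C} = pts B \<inter> pts C - {x, w}"
  by (auto simp: Nb_def Lb_def col_def pts_def blk_def)

lemma card_BC2: "col x w \<Longrightarrow> B \<in> Lb x w \<Longrightarrow> C \<in> Lb x w \<Longrightarrow> B \<noteq> C \<Longrightarrow> card (pts B \<inter> pts C - {x, w}) = y - 2"
proof -
  assume c: "col x w" and B: "B \<in> Lb x w" and C: "C \<in> Lb x w" and ne: "B \<noteq> C"
  note dB = Lb_D[OF B c] and dC = Lb_D[OF C c]
  have cy: "card (pts B \<inter> pts C) = y" using meet_y[of B C x] dB dC ne by simp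
  have "card (pts B \<inter> pts C - {x, w}) = card (pts B \<inter> pts C) - card {x, w}"
    using dB dC fin_pts by (intro card_Diff_subset) auto
  moreover have "card {x, w} = 2" using colD[OF c] by simp
  ultimately show ?thesis using cy by simp
qed

lemma H2_sum1: "col x w \<Longrightarrow> (\<Sum>z\<in>Nb x w. card {B\<in>Lb x w. I z B}) = l * (k - 2)"
proof -
  assume c: "col x w"
  have "(\<Sum>z\<in>Nb x w. card {B\<in>Lb x w. I z B}) = (\<Sum>B\<in>Lb x w. card {z\<in>Nb x w. I z B})"
    by (rule dc[OF fin_Nb fin_Lb])
  also have "\<dots> = (\<Sum>B\<in>Lb x w. k - 2)"
    by (rule sum.cong[OF refl]) (simp add: Nb_B[OF c] card_pts2[OF c])
  finally show ?thesis using card_Lb[OF c] by simp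
qed

lemma H2_sum2: "col x w \<Longrightarrow> (\<Sum>z\<in>Nb x w. card {B\<in>Lb x w. I z B} * card {C\<in>Lb x w. I z C}) = l * ((k - 2) + (l - 1) * (y - 2))"
proof -
  assume c: "col x w"
  have "(\<Sum>z\<in>Nb x w. card {B\<in>Lb x w. I z B} * card {C\<in>Lb x w. I z C})
     = (\<Sum>B\<in>Lb x w. \<Sum>C\<in>Lb x w. card {z\<in>Nb x w. I z B \<and> I z C})"
    by (rule dc2[OF fin_Lb fin_Lb fin_Nb])
  also have "\<dots> = (\<Sum>B\<in>Lb x w. (k - 2) + (l - 1) * (y - 2))"
  proof (rule sum.cong[OF refl])
    fix B assume B: "B \<in> Lb x w"
    have "(\<Sum>C\<in>Lb x w. card {z\<in>Nb x w. I z B \<and> I z C})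
       = card {z\<in>Nb x w. I z B \<and> I z B} + (\<Sum>C\<in>Lb x w - {B}. card {z\<in>Nb x w. I z B \<and> I z C})"
      using B fin_Lb by (simp add: sum.remove)
    also have "card {z\<in>Nb x w. I z B \<and> I z B} = k - 2" using Nb_B[OF c B] card_pts2[OF c B] by simp
    also have "(\<Sum>C\<in>Lb x w - {B}. card {z\<in>Nb x w. I z B \<and> I z C}) = (\<Sum>C\<in>Lb x w - {B}. y - 2)"
    proof (rule sum.cong[OF refl])
      fix C assume C: "C \<in> Lb x w - {B}"
      then have C': "C \<in> Lb x w" "B \<noteq> C" by auto
      show "card {z\<in>Nb x w. I z B \<and> I z C} = y - 2" using Nb_BC[OF c B C'(1)] card_BC2[OF c B C'] by simp
    qed
    also have "\<dots> = (l - 1) * (y - 2)" using B card_Lb[OF c] fin_Lb by (simp add: card_Diff_singleton)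
    finally show "(\<Sum>C\<in>Lb x w. card {z\<in>Nb x w. I z B \<and> I z C}) = (k - 2) + (l - 1) * (y - 2)" .
  qed
  also have "\<dots> = l * ((k - 2) + (l - 1) * (y - 2))" using card_Lb[OF c] by simp
  finally show ?thesis .
qed

lemma H2_cardN: "col x w \<Longrightarrow> card (Nb x w) * l = l * (k - 2) + (r - l) * (t - 1)"
proof -
  assume c: "col x w"
  note cd = colD[OF c]
  have x: "x \<in> P" using cd by simp
  have "(\<Sum>z\<in>Nb x w. card {B\<in>blk x. I z B}) = (\<Sum>B\<in>blk x. card {z\<in>Nb x w. I z B})"
    by (rule dc[OF fin_Nb fin_blk])
  also have "\<dots> = (\<Sum>B\<in>blk x - Lb x w. card {z\<in>Nb x w. I z B}) + (\<Sum>B\<in>Lb x w. card {z\<in>Nb x w. I z B})"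
    by (rule sum.subset_diff) (auto simp: Lb_def fin_blk)
  also have "(\<Sum>B\<in>Lb x w. card {z\<in>Nb x w. I z B}) = l * (k - 2)"
  proof -
    have "(\<Sum>B\<in>Lb x w. card {z\<in>Nb x w. I z B}) = (\<Sum>B\<in>Lb x w. k - 2)"
      by (rule sum.cong[OF refl]) (simp add: Nb_B[OF c] card_pts2[OF c])
    then show ?thesis using card_Lb[OF c] by simp
  qed
  also have "(\<Sum>B\<in>blk x - Lb x w. card {z\<in>Nb x w. I z B}) = (\<Sum>B\<in>blk x - Lb x w. t - 1)"
  proof (rule sum.cong[OF refl])
    fix B assume B: "B \<in> blk x - Lb x w"
    then have B': "B \<in> Bs" "I x B" "\<not> I w B" by (auto simp: Lb_def blk_def)
    have wx: "card (blk w \<inter> blk x) = l" using col_card[OF col_sym[OF c]] .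
    have xS: "x \<in> {q\<in>pts B. card (blk w \<inter> blk q) = l}" using wx B' x by (simp add: pts_def)
    have eq: "{z\<in>Nb x w. I z B} = {q\<in>pts B. card (blk w \<inter> blk q) = l} - {x}"
    proof (intro set_eqI iffI)
      fix z assume "z \<in> {z\<in>Nb x w. I z B}"
      then have z: "col x z" "col w z" "I z B" by (auto simp: Nb_def)
      then show "z \<in> {q\<in>pts B. card (blk w \<inter> blk q) = l} - {x}"
        using col_card[OF z(2)] colD[OF z(1)] by (auto simp: pts_def)
    next
      fix z assume z: "z \<in> {q\<in>pts B. card (blk w \<inter> blk q) = l} - {x}"
      then have zP: "z \<in> P" "I z B" "z \<noteq> x" "card (blk w \<inter> blk z) = l" by (auto simp: pts_def)
      have zw: "z \<noteq> w" using zP B' by auto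
      have "col w z" using col_iff[of w z] cd zP zw by simp
      moreover have "col x z" using zP B' x unfolding col_def by blast
      ultimately show "z \<in> {z\<in>Nb x w. I z B}" using zP by (simp add: Nb_def)
    qed
    have "card ({q\<in>pts B. card (blk w \<inter> blk q) = l} - {x}) = t - 1"
      using nonflag[of w B] cd B' xS fin_pts by (simp add: card_Diff_singleton)
    then show "card {z\<in>Nb x w. I z B} = t - 1" using eq by simp
  qed
  also have "(\<Sum>B\<in>blk x - Lb x w. t - 1) = (r - l) * (t - 1)"
  proof -
    have "card (blk x - Lb x w) = r - l"
      using card_blk[OF x] card_Lb[OF c] fin_Lb by (simp add: Lb_def card_Diff_subset)
    then show ?thesis by simp
  qed
  finally have e: "(\<Sum>z\<in>Nb x w. card {B\<in>blk x. I z B}) = (r - l) * (t - 1) + l * (k - 2)" .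
  have "(\<Sum>z\<in>Nb x w. card {B\<in>blk x. I z B}) = (\<Sum>z\<in>Nb x w. l)"
  proof (rule sum.cong[OF refl])
    fix z assume "z \<in> Nb x w"
    then have "col x z" by (simp add: Nb_def)
    then show "card {B\<in>blk x. I z B} = l" using col_card blk_q by simp
  qed
  then show ?thesis using e by simp
qed

end

lemma dvh: fixes A X B :: real shows "A \<noteq> 0 \<Longrightarrow> A*X = B \<Longrightarrow> X = B/A"
  by (simp add: field_simps)

lemma alg_alpha:
  fixes k y l r :: real
  assumes y1: "y > 1" and hR1: "(r-1)*(y-1) = (k-1)*(l-1)"
  shows "k*r - k - y*(2*r-l-1) = (l-1)*(k-y)*(k-y-1)/(y-1)"
proof -
  have "(y-1)*(k*r - k - y*(2*r-l-1)) = (l-1)*(k-y)*(k-y-1)" using hR1 by algebra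
  then show ?thesis using y1 by (intro dvh) auto
qed

lemma alg_beta:
  fixes k y l r t :: real
  assumes y1: "y > 1" and hR1: "(r-1)*(y-1) = (k-1)*(l-1)"
    and M0: "(l-1)*(y-2)+k-2 \<noteq> 0"
    and hT: "t*((l-1)*(y-2)+k-2) = k*y*l-k*l+k-y*l-y"
  shows "y*(r+(k-1)*l)+(k-y)*t*l - 2*k*y - y^2*(2*r-l-2)
     = (l-1)*(k-y)*(k*y^2*l-2*k*y*l-k*y+k*l-y^3*l+y^2*l+y^2+y*l)/((y-1)*((l-1)*(y-2)+k-2))"
proof -
  have "((y-1)*((l-1)*(y-2)+k-2))*(y*(r+(k-1)*l)+(k-y)*t*l - 2*k*y - y^2*(2*r-l-2))
     = (l-1)*(k-y)*(k*y^2*l-2*k*y*l-k*y+k*l-y^3*l+y^2*l+y^2+y*l)" using hR1 hT by algebra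
  then show ?thesis using y1 M0 by (intro dvh) auto
qed


lemma alg_Z:
  fixes k y l r t b :: real
  assumes hR1: "(r-1)*(y-1) = (k-1)*(l-1)"
    and hT: "t*((l-1)*(y-2)+k-2) = k*y*l-k*l+k-y*l-y"
    and hb: "l*t*(b-r) = r*(k-1)*(r-l)"
  shows "l*t*((l-1)*(y-2)+k-2)*(y-1)^2*(b-2*r+l) = (l-1)*(k-y)*
   (k^3*l-k^3+k^2*y*l^2-2*k^2*y*l+2*k^2*y-2*k^2*l^2+k^2-k*y^2*l^2+k*y^2*l-k*y^2-2*k*y+3*k*l^2+y^2*l^2+y^2-2*l^2)"
  using hR1 hT hb by algebra

lemma alg_final:
  fixes k y l :: real
  defines "M \<equiv> (l-1)*(y-2)+k-2"
  defines "Pb \<equiv> k*y^2*l-2*k*y*l-k*y+k*l-y^3*l+y^2*l+y^2+y*l"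
  defines "PZ \<equiv> k^3*l-k^3+k^2*y*l^2-2*k^2*y*l+2*k^2*y-2*k^2*l^2+k^2-k*y^2*l^2+k*y^2*l-k*y^2-2*k*y+3*k*l^2+y^2*l^2+y^2-2*l^2"
  defines "TM \<equiv> k*y*l-k*l+k-y*l-y"
  shows "PZ*(y*(k-y-1)*M+(l-1)*Pb)-l^2*(k-y-1)^2*(y-1)*M*TM = (l-1)*(k-y)^2*(k-l-y)*(k-l-1)*(k*y-y^2-l)"
  unfolding M_def Pb_def PZ_def TM_def by algebra


lemma alg_caseB:
  fixes k y l r t b :: real
  assumes y1: "y > 1" and l1: "l > 1" and ky: "k > y" and t0: "t > 0"
    and hR1: "(r-1)*(y-1) = (k-1)*(l-1)"
    and hT: "t*((l-1)*(y-2)+k-2) = k*y*l-k*l+k-y*l-y"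
    and hb: "l*t*(b-r) = r*(k-1)*(r-l)"
    and M0: "(l-1)*(y-2)+k-2 \<noteq> 0"
  shows "(b-2*r+l)*(l*y*(k*r - k - y*(2*r-l-1)) + l*(l-1)*(y*(r+(k-1)*l)+(k-y)*t*l - 2*k*y - y^2*(2*r-l-2)))
     = l^2*(k*r - k - y*(2*r-l-1))^2 \<longleftrightarrow> (k-l-y)*(k-l-1)*(k*y-y^2-l) = 0"
proof -
  define M where "M = (l-1)*(y-2)+k-2"
  define K9 where "K9 = k*r - k - y*(2*r-l-1)"
  define Y2 where "Y2 = y*(r+(k-1)*l)+(k-y)*t*l - 2*k*y - y^2*(2*r-l-2)"
  define Z where "Z = b-2*r+l"
  have hZ: "l*t*M*(y-1)^2*Z = (l-1)*(k-y)*
   (k^3*l-k^3+k^2*y*l^2-2*k^2*y*l+2*k^2*y-2*k^2*l^2+k^2-k*y^2*l^2+k*y^2*l-k*y^2-2*k*y+3*k*l^2+y^2*l^2+y^2-2*l^2)"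
    unfolding M_def Z_def by (rule alg_Z[OF hR1 hT hb])
  have hK: "(y-1)*K9 = (l-1)*(k-y)*(k-y-1)" unfolding K9_def using hR1 by algebra
  have hY: "((y-1)*M)*Y2 = (l-1)*(k-y)*(k*y^2*l-2*k*y*l-k*y+k*l-y^3*l+y^2*l+y^2+y*l)"
    unfolding M_def Y2_def using hR1 hT by algebra
  have hT': "t*M = k*y*l-k*l+k-y*l-y" using hT unfolding M_def .
  have fin: "(k^3*l-k^3+k^2*y*l^2-2*k^2*y*l+2*k^2*y-2*k^2*l^2+k^2-k*y^2*l^2+k*y^2*l-k*y^2-2*k*y+3*k*l^2+y^2*l^2+y^2-2*l^2)
     *(y*(k-y-1)*M+(l-1)*(k*y^2*l-2*k*y*l-k*y+k*l-y^3*l+y^2*l+y^2+y*l))-l^2*(k-y-1)^2*(y-1)*M*(k*y*l-k*l+k-y*l-y)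
     = (l-1)*(k-y)^2*(k-l-y)*(k-l-1)*(k*y-y^2-l)"
    unfolding M_def by (rule alg_final)
  have e1: "(y-1)^3*M^2*t*(Z*(l*y*K9 + l*(l-1)*Y2) - l^2*K9^2) =
     (l*t*M*(y-1)^2*Z)*(y*M*((y-1)*K9) + (l-1)*(((y-1)*M)*Y2)) - l^2*(y-1)*M*(t*M)*((y-1)*K9)^2"
    by algebra
  have key: "(y-1)^3*M^2*t*(Z*(l*y*K9 + l*(l-1)*Y2) - l^2*K9^2) = (l-1)^3*(k-y)^4*((k-l-y)*(k-l-1)*(k*y-y^2-l))"
    unfolding e1 hZ hK hY hT' using fin by algebra
  have nz: "(y-1)^3*M^2*t \<noteq> 0" using y1 t0 M0 unfolding M_def by simp
  have nz2: "(l-1)^3*(k-y)^4 \<noteq> 0" using l1 ky by simp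
  show ?thesis
    unfolding K9_def[symmetric] Y2_def[symmetric] Z_def[symmetric]
  proof
    assume "Z*(l*y*K9 + l*(l-1)*Y2) = l^2*K9^2"
    then have "(l-1)^3*(k-y)^4*((k-l-y)*(k-l-1)*(k*y-y^2-l)) = 0" using key by simp
    then show "(k-l-y)*(k-l-1)*(k*y-y^2-l) = 0" using nz2 by simp
  next
    assume "(k-l-y)*(k-l-1)*(k*y-y^2-l) = 0"
    then have "(y-1)^3*M^2*t*(Z*(l*y*K9 + l*(l-1)*Y2) - l^2*K9^2) = 0" using key by simp
    then show "Z*(l*y*K9 + l*(l-1)*Y2) = l^2*K9^2" using nz by simp
  qed
qed


lemma mul_helper: fixes A X B :: real shows "A \<noteq> 0 \<Longrightarrow> X = B / A \<Longrightarrow> X * A = B" by simp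
lemma diff_iff_helper: fixes a b c d :: real shows "a - b = c - d \<Longrightarrow> (a = b) = (c = d)" by auto

lemma alg_H2:
  fixes k y l r t :: real
  assumes y1: "y > 1" and l1: "l > 1" and ky: "k > y"
    and hR1: "(r-1)*(y-1) = (k-1)*(l-1)"
  shows "(l*(k-2) + (r-l)*(t-1)) * ((l-1)*(y-2)+(k-2)) = l^2*(k-2)^2
     \<longleftrightarrow> t*((l-1)*(y-2)+k-2) = k*y*l-k*l+k-y*l-y"
proof -
  have key: "(y-1)*((l*(k-2) + (r-l)*(t-1)) * ((l-1)*(y-2)+(k-2)) - l^2*(k-2)^2)
     = (l-1)*(k-y)*(t*((l-1)*(y-2)+k-2) - (k*y*l-k*l+k-y*l-y))"
    using hR1 by algebra
  have nz1: "y - 1 \<noteq> 0" using y1 by simp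
  have nz2: "(l-1)*(k-y) \<noteq> 0" using l1 ky by simp
  show ?thesis
  proof
    assume "(l*(k-2) + (r-l)*(t-1)) * ((l-1)*(y-2)+(k-2)) = l^2*(k-2)^2"
    then have "(l-1)*(k-y)*(t*((l-1)*(y-2)+k-2) - (k*y*l-k*l+k-y*l-y)) = 0" using key by simp
    then show "t*((l-1)*(y-2)+k-2) = k*y*l-k*l+k-y*l-y" using nz2 by simp
  next
    assume "t*((l-1)*(y-2)+k-2) = k*y*l-k*l+k-y*l-y"
    then have "(y-1)*((l*(k-2) + (r-l)*(t-1)) * ((l-1)*(y-2)+(k-2)) - l^2*(k-2)^2) = 0" using key by simp
    then show "(l*(k-2) + (r-l)*(t-1)) * ((l-1)*(y-2)+(k-2)) = l^2*(k-2)^2" using nz1 by simp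
  qed
qed

lemma alg_F1:
  fixes k y l r t :: real
  assumes y2: "y \<ge> 2" and l1: "l > 1" and ky: "k > y"
    and hR1: "(r-1)*(y-1) = (k-1)*(l-1)"
  shows "k = (y - 1) * (r - l) * (t - 1) / (l * (t - y)) + 2
     \<longleftrightarrow> t*((l-1)*(y-2)+k-2) = k*y*l-k*l+k-y*l-y"
proof (cases "t = y")
  case True
  have "(k*y*l-k*l+k-y*l-y) - y*((l-1)*(y-2)+k-2) = (y-1)*(l-1)*(k-y)" by algebra
  moreover have "(y-1)*(l-1)*(k-y) \<noteq> 0" using y2 l1 ky by simp
  ultimately have "y*((l-1)*(y-2)+k-2) \<noteq> k*y*l-k*l+k-y*l-y" by auto
  moreover have "k \<noteq> 2" using y2 ky by simp
  ultimately show ?thesis using True by simp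
next
  case False
  have lt: "l * (t - y) \<noteq> 0" using False l1 by simp
  have "k = (y - 1) * (r - l) * (t - 1) / (l * (t - y)) + 2 \<longleftrightarrow> (k - 2) * (l * (t - y)) = (y - 1) * (r - l) * (t - 1)"
    using lt by (simp add: field_simps)
  also have "\<dots> \<longleftrightarrow> t*((l-1)*(y-2)+k-2) = k*y*l-k*l+k-y*l-y"
  proof -
    have "(k - 2) * (l * (t - y)) - (y - 1) * (r - l) * (t - 1) = t*((l-1)*(y-2)+k-2) - (k*y*l-k*l+k-y*l-y)"
      using hR1 by algebra
    then show ?thesis by (rule diff_iff_helper)
  qed
  finally show ?thesis .
qed

lemma alg_F2:
  fixes k y l r t :: real
  assumes y1: "y > 1" and l1: "l > 1"
    and hR1: "(r-1)*(y-1) = (k-1)*(l-1)"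
    and hT: "t*((l-1)*(y-2)+k-2) = k*y*l-k*l+k-y*l-y"
    and M0: "(l-1)*(y-2)+k-2 \<noteq> 0"
  shows "t = (k - 1) * (r * (y - 1) - l * (k - y - 1)) / (l * (y - 1))
     \<longleftrightarrow> (k-y)*(k-l-y)*(k-l-1) = 0"
proof -
  have ly: "l * (y - 1) \<noteq> 0" using y1 l1 by simp
  have "t = (k - 1) * (r * (y - 1) - l * (k - y - 1)) / (l * (y - 1))
     \<longleftrightarrow> t * (l * (y - 1)) - (k - 1) * (r * (y - 1) - l * (k - y - 1)) = 0"
    using ly by (simp add: field_simps)
  also have "\<dots> \<longleftrightarrow> ((l-1)*(y-2)+k-2) * (t * (l * (y - 1)) - (k - 1) * (r * (y - 1) - l * (k - y - 1))) = 0"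
    using M0 by simp
  also have "((l-1)*(y-2)+k-2) * (t * (l * (y - 1)) - (k - 1) * (r * (y - 1) - l * (k - y - 1)))
     = (k-y)*(k-l-y)*(k-l-1)"
    using hR1 hT by algebra
  finally show ?thesis .
qed

lemma alg_t0:
  fixes k y l r :: real
  assumes y1: "y > 1" and l1: "l > 1" and k1: "k > 1"
    and hR1: "(r-1)*(y-1) = (k-1)*(l-1)"
  shows "\<not> (k = (y - 1) * (r - l) * (0 - 1) / (l * (0 - y)) + 2
     \<and> 0 = (k - 1) * (r * (y - 1) - l * (k - y - 1)) / (l * (y - 1)))"
proof
  assume h: "k = (y - 1) * (r - l) * (0 - 1) / (l * (0 - y)) + 2
     \<and> 0 = (k - 1) * (r * (y - 1) - l * (k - y - 1)) / (l * (y - 1))"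
  have ly: "l * y \<noteq> 0" "l * (y - 1) \<noteq> 0" using y1 l1 by auto
  have A: "r * (y - 1) = l * (k - y - 1)"
  proof -
    have "(k - 1) * (r * (y - 1) - l * (k - y - 1)) = 0" using h ly(2) by (simp add: field_simps)
    then show ?thesis using k1 by simp
  qed
  have B: "(k - 2) * (l * y) = (y - 1) * (r - l)"
  proof -
    have "k - 2 = (y - 1) * (r - l) * (0 - 1) / (l * (0 - y))" using h by simp
    moreover have "l * (0 - y) \<noteq> 0" using ly(1) by simp
    ultimately have "(k - 2) * (l * (0 - y)) = (y - 1) * (r - l) * (0 - 1)" using mul_helper by blast
    then show ?thesis by algebra
  qed
  have "l * y * (y - 1) * (l + 1) = 0" using A B hR1 by algebra
  then show False using y1 l1 by simp
qed


context ctx begin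

definition "EQ2r \<longleftrightarrow> (real l*(real k-2) + (real r-real l)*(real t-1)) * ((real l-1)*(real y-2)+(real k-2)) = (real l)^2*(real k-2)^2"

lemma Lb_z: "card (blk x \<inter> blk w \<inter> blk z) = card {B\<in>Lb x w. I z B}"
  by (rule arg_cong[where f=card]) (auto simp: Lb_def blk_def)

lemma H2_reals:
  assumes t1: "t \<ge> 1" and c: "col x w"
  shows "(\<Sum>z\<in>Nb x w. real (card {B\<in>Lb x w. I z B})) = real l * (real k - 2)"
    and "(\<Sum>z\<in>Nb x w. (real (card {B\<in>Lb x w. I z B}))^2) = real l * ((real k - 2) + (real l - 1) * (real y - 2))"
    and "real (card (Nb x w)) * real l = real l * (real k - 2) + (real r - real l) * (real t - 1)"
proof -
  have k2: "2 \<le> k" using k_ge .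
  have y2: "2 \<le> y" using y1 by simp
  have l1: "1 \<le> l" using l_ge2 by simp
  have "real (\<Sum>z\<in>Nb x w. card {B\<in>Lb x w. I z B}) = real (l * (k - 2))" using H2_sum1[OF c] by simp
  then show "(\<Sum>z\<in>Nb x w. real (card {B\<in>Lb x w. I z B})) = real l * (real k - 2)"
    using k2 by (simp add: of_nat_diff)
  have "real (\<Sum>z\<in>Nb x w. card {B\<in>Lb x w. I z B} * card {C\<in>Lb x w. I z C}) = real (l * ((k - 2) + (l - 1) * (y - 2)))"
    using H2_sum2[OF c] by simp
  then show "(\<Sum>z\<in>Nb x w. (real (card {B\<in>Lb x w. I z B}))^2) = real l * ((real k - 2) + (real l - 1) * (real y - 2))"
    using k2 y2 l1 by (simp add: of_nat_diff power2_eq_square)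
  have "real (card (Nb x w) * l) = real (l * (k - 2) + (r - l) * (t - 1))" using H2_cardN[OF c] by simp
  then show "real (card (Nb x w)) * real l = real l * (real k - 2) + (real r - real l) * (real t - 1)"
    using k2 t1 r_ge_l by (simp add: of_nat_diff)
qed

lemma H2_pair:
  assumes t1: "t \<ge> 1" and c: "col x w"
  shows "(\<exists>cc. \<forall>z\<in>Nb x w. card {B\<in>Lb x w. I z B} = cc) \<longleftrightarrow> EQ2r"
proof -
  define f where "f z = real (card {B\<in>Lb x w. I z B})" for z
  note R = H2_reals[OF t1 c, folded f_def]
  have "(\<exists>cc. \<forall>z\<in>Nb x w. card {B\<in>Lb x w. I z B} = cc) \<longleftrightarrow> (\<exists>cc. \<forall>z\<in>Nb x w. f z = cc)"
    unfolding f_def by (rule ex_nat_real)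
  also have "\<dots> \<longleftrightarrow> real (card (Nb x w)) * (\<Sum>z\<in>Nb x w. (f z)^2) = (\<Sum>z\<in>Nb x w. f z)^2"
    by (rule var_const[OF fin_Nb])
  also have "\<dots> \<longleftrightarrow> (real (card (Nb x w)) * real l) * (\<Sum>z\<in>Nb x w. (f z)^2) = real l * (\<Sum>z\<in>Nb x w. f z)^2"
    using l_ge2 by (simp add: mult.assoc mult.left_commute)
  also have "\<dots> \<longleftrightarrow> EQ2r"
  proof -
    have lp: "real l \<noteq> 0" using l_ge2 by simp
    have "(real (card (Nb x w)) * real l) * (\<Sum>z\<in>Nb x w. (f z)^2) = real l * (\<Sum>z\<in>Nb x w. f z)^2
      \<longleftrightarrow> real l * ((real l*(real k-2) + (real r-real l)*(real t-1)) * ((real l-1)*(real y-2)+(real k-2)))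
        = real l * ((real l)^2*(real k-2)^2)"
      unfolding R by (simp add: algebra_simps power2_eq_square)
    also have "\<dots> \<longleftrightarrow> EQ2r" unfolding EQ2r_def using lp by simp
    finally show ?thesis .
  qed
  finally show ?thesis .
qed

lemma H2_val:
  assumes t1: "t \<ge> 1" and c: "col x w" and e: "EQ2r" and z: "z \<in> Nb x w"
  shows "real (card {B\<in>Lb x w. I z B}) = real l * (real k - 2) * real l / (real l * (real k - 2) + (real r - real l) * (real t - 1))"
proof -
  define f where "f z = real (card {B\<in>Lb x w. I z B})" for z
  note R = H2_reals[OF t1 c, folded f_def]
  obtain cc where cc: "\<forall>z\<in>Nb x w. card {B\<in>Lb x w. I z B} = cc" using H2_pair[OF t1 c] e by blast
  then have "\<forall>z\<in>Nb x w. f z = real cc" unfolding f_def by simp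
  then have "f z * real (card (Nb x w)) = (\<Sum>z\<in>Nb x w. f z)" using z by simp
  then have fz: "f z * real (card (Nb x w)) = real l * (real k - 2)" using R(1) by simp
  have cN: "card (Nb x w) > 0" using z fin_Nb card_gt_0_iff by blast
  have D: "real (card (Nb x w)) * real l = real l * (real k - 2) + (real r - real l) * (real t - 1)" using R(3) .
  have Dnz: "real l * (real k - 2) + (real r - real l) * (real t - 1) \<noteq> 0"
    using D cN l_ge2 by (metis mult_eq_0_iff of_nat_0_less_iff less_numeral_extra(3) not_numeral_le_zero of_nat_eq_0_iff)
  have "f z * (real l * (real k - 2) + (real r - real l) * (real t - 1)) = real l * (real k - 2) * real l"
    using fz unfolding D[symmetric] by (simp add: mult.assoc[symmetric])
  then show ?thesis using Dnz unfolding f_def by (simp add: eq_divide_eq)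
qed

definition "H2set \<longleftrightarrow> (\<exists>c. \<forall>x\<in>P. \<forall>w. col x w \<longrightarrow> (\<forall>z. col x z \<and> col w z \<longrightarrow> card (blk x \<inter> blk w \<inter> blk z) = c))"

lemma H2_iff: "t \<ge> 1 \<Longrightarrow> H2set \<longleftrightarrow> EQ2r"
proof
  assume t1: "t \<ge> 1" and h: "H2set"
  obtain x w where c: "col x w" using ex_col by blast
  obtain cc where cc: "\<forall>x\<in>P. \<forall>w. col x w \<longrightarrow> (\<forall>z. col x z \<and> col w z \<longrightarrow> card (blk x \<inter> blk w \<inter> blk z) = cc)"
    using h unfolding H2set_def by blast
  have "\<forall>z\<in>Nb x w. card {B\<in>Lb x w. I z B} = cc" using cc c colD[OF c] unfolding Nb_def Lb_z by auto
  then show "EQ2r" using H2_pair[OF t1 c] by blast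
next
  assume t1: "t \<ge> 1" and e: "EQ2r"
  define c0 where "c0 = real l * (real k - 2) * real l / (real l * (real k - 2) + (real r - real l) * (real t - 1))"
  have "\<forall>x\<in>P. \<forall>w. col x w \<longrightarrow> (\<forall>z. col x z \<and> col w z \<longrightarrow> card (blk x \<inter> blk w \<inter> blk z) = nat \<lfloor>c0\<rfloor>)"
  proof (intro ballI allI impI)
    fix x w z assume "x \<in> P" "col x w" "col x z \<and> col w z"
    then have "real (card {B\<in>Lb x w. I z B}) = c0" unfolding c0_def using H2_val[OF t1 _ e] by (simp add: Nb_def)
    then show "card (blk x \<inter> blk w \<inter> blk z) = nat \<lfloor>c0\<rfloor>" unfolding Lb_z by (rule nat_of_real_val)
  qed
  then show "H2set" unfolding H2set_def by blast
qed

end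

context ctx begin

definition Zb where "Zb x w = {z\<in>Bs. \<not> I x z \<and> \<not> I w z}"
definition Ub where "Ub x w = blk x \<union> blk w"
definition G2s where "G2s z = {C\<in>Bs. C \<noteq> z \<and> (\<exists>p\<in>pts z. I p C)}"
definition cz where "cz z B = card (pts z \<inter> pts B)"

lemma fin_Zb: "finite (Zb x w)" by (rule finite_subset[OF _ finB]) (auto simp: Zb_def)
lemma fin_Ub: "finite (Ub x w)" by (simp add: Ub_def fin_blk)
lemma Bs_split: "Bs = Zb x w \<union> Ub x w" "Zb x w \<inter> Ub x w = {}"
  by (auto simp: Zb_def Ub_def blk_def)
lemma Lb_Ub: "Lb x w \<subseteq> Ub x w" by (auto simp: Lb_def Ub_def)

lemma card_Ub: "col x w \<Longrightarrow> card (Ub x w) + l = 2 * r"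
proof -
  assume c: "col x w"
  note cd = colD[OF c]
  have "card (blk x) + card (blk w) = card (blk x \<union> blk w) + card (blk x \<inter> blk w)"
    by (rule card_Un_Int) (simp_all add: fin_blk)
  then show ?thesis using card_blk cd col_card[OF c] by (simp add: Ub_def)
qed

lemma card_Zb: "col x w \<Longrightarrow> card (Zb x w) + card (Ub x w) = b"
proof -
  assume c: "col x w"
  have "card (Zb x w \<union> Ub x w) = card (Zb x w) + card (Ub x w)"
    by (rule card_Un_disjoint) (simp_all add: fin_Zb fin_Ub Bs_split(2))
  then show ?thesis using Bs_split(1)[of x w] cardB by simp
qed

lemma cz_set: "cz z B = card {p\<in>pts B. I p z}"
  unfolding cz_def by (rule arg_cong[where f=card]) (auto simp: pts_def)

lemma Ub_meet: "col x w \<Longrightarrow> B \<in> Lb x w \<Longrightarrow> z \<in> Ub x w \<Longrightarrow> z \<noteq> B \<Longrightarrow> cz z B = y"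
proof -
  assume c: "col x w" and B: "B \<in> Lb x w" and z: "z \<in> Ub x w" and ne: "z \<noteq> B"
  note d = Lb_D[OF B c]
  have zB: "z \<in> Bs" using z by (auto simp: Ub_def blk_def)
  from z have "x \<in> pts z \<or> w \<in> pts z" using colD[OF c] by (auto simp: Ub_def blk_def pts_def)
  then show ?thesis
  proof
    assume "x \<in> pts z" then show ?thesis unfolding cz_def using meet_y[OF zB _ ne] d by blast
  next
    assume "w \<in> pts z" then show ?thesis unfolding cz_def using meet_y[OF zB _ ne] d by blast
  qed
qed

lemma cz_self: "B \<in> Bs \<Longrightarrow> cz B B = k" by (simp add: cz_def card_pts)

lemma cz_vals: "z \<in> Bs \<Longrightarrow> B \<in> Bs \<Longrightarrow> z \<noteq> B \<Longrightarrow> cz z B = (if B \<in> G2s z then y else 0)"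
proof -
  assume a: "z \<in> Bs" "B \<in> Bs" "z \<noteq> B"
  show ?thesis
  proof (cases "B \<in> G2s z")
    case True
    then obtain p where "p \<in> pts z" "I p B" by (auto simp: G2s_def)
    then have "p \<in> pts B" by (simp add: pts_def)
    then show ?thesis using True meet_y[OF a(1,2,3) \<open>p \<in> pts z\<close>] by (simp add: cz_def)
  next
    case False
    then have "pts z \<inter> pts B = {}" using a by (auto simp: G2s_def pts_def)
    then show ?thesis using False by (simp add: cz_def)
  qed
qed

lemma sum_cz_all: "B \<in> Bs \<Longrightarrow> (\<Sum>z\<in>Bs. cz z B) = k * r"
proof -
  assume B: "B \<in> Bs"
  have "(\<Sum>z\<in>Bs. cz z B) = (\<Sum>z\<in>Bs. card {p\<in>pts B. I p z})" by (simp add: cz_set)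
  also have "\<dots> = (\<Sum>p\<in>pts B. card {z\<in>Bs. I p z})" by (rule dc[OF fin_pts finB, symmetric])
  also have "\<dots> = (\<Sum>p\<in>pts B. r)"
    by (rule sum.cong[OF refl]) (metis blk_def card_blk in_pts)
  finally show ?thesis using card_pts[OF B] by simp
qed

lemma K9_nat: "col x w \<Longrightarrow> B \<in> Lb x w \<Longrightarrow> (\<Sum>z\<in>Zb x w. cz z B) + k + y * (card (Ub x w) - 1) = k * r"
proof -
  assume c: "col x w" and B: "B \<in> Lb x w"
  note d = Lb_D[OF B c]
  have BU: "B \<in> Ub x w" using B Lb_Ub by blast
  have "(\<Sum>z\<in>Bs. cz z B) = (\<Sum>z\<in>Zb x w \<union> Ub x w. cz z B)" by (simp only: Bs_split(1)[symmetric])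
  also have "\<dots> = (\<Sum>z\<in>Zb x w. cz z B) + (\<Sum>z\<in>Ub x w. cz z B)"
    by (rule sum.union_disjoint) (simp_all add: fin_Zb fin_Ub Bs_split(2))
  finally have "(\<Sum>z\<in>Bs. cz z B) = (\<Sum>z\<in>Zb x w. cz z B) + (\<Sum>z\<in>Ub x w. cz z B)" .
  moreover have "(\<Sum>z\<in>Ub x w. cz z B) = k + y * (card (Ub x w) - 1)"
  proof -
    have "(\<Sum>z\<in>Ub x w. cz z B) = cz B B + (\<Sum>z\<in>Ub x w - {B}. cz z B)"
      using BU fin_Ub by (simp add: sum.remove)
    also have "(\<Sum>z\<in>Ub x w - {B}. cz z B) = (\<Sum>z\<in>Ub x w - {B}. y)"
      by (rule sum.cong[OF refl]) (use Ub_meet[OF c B] in auto)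
    finally show ?thesis using cz_self d BU fin_Ub by (simp add: card_Diff_singleton)
  qed
  ultimately show ?thesis using sum_cz_all d by simp
qed

lemma inner_sum: "p \<in> P \<Longrightarrow> C \<in> Bs \<Longrightarrow>
   (\<Sum>q\<in>pts C. card {z\<in>Bs. I p z \<and> I q z}) = (if p \<in> pts C then r + (k - 1) * l else t * l)"
proof -
  assume p: "p \<in> P" and C: "C \<in> Bs"
  have e: "\<And>q. card {z\<in>Bs. I p z \<and> I q z} = card (blk p \<inter> blk q)"
    by (rule arg_cong[where f=card]) (auto simp: blk_def)
  show ?thesis
  proof (cases "p \<in> pts C")
    case True
    have "(\<Sum>q\<in>pts C. card (blk p \<inter> blk q)) = card (blk p \<inter> blk p) + (\<Sum>q\<in>pts C - {p}. card (blk p \<inter> blk q))"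
      using True fin_pts by (simp add: sum.remove)
    also have "(\<Sum>q\<in>pts C - {p}. card (blk p \<inter> blk q)) = (\<Sum>q\<in>pts C - {p}. l)"
    proof (rule sum.cong[OF refl])
      fix q assume q: "q \<in> pts C - {p}"
      have "col p q" using q True C p unfolding col_def pts_def by blast
      then show "card (blk p \<inter> blk q) = l" by (rule col_card)
    qed
    finally show ?thesis using True card_blk[OF p] card_pts[OF C] fin_pts by (simp add: e card_Diff_singleton)
  next
    case False
    have "(\<Sum>q\<in>pts C. card (blk p \<inter> blk q)) = (\<Sum>q\<in>pts C. if card (blk p \<inter> blk q) = l then l else 0)"
    proof (rule sum.cong[OF refl])
      fix q assume q: "q \<in> pts C"
      have "q \<noteq> p" using q False by auto
      then show "card (blk p \<inter> blk q) = (if card (blk p \<inter> blk q) = l then l else 0)"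
        using lam_cases[OF p _ \<open>q \<noteq> p\<close>[symmetric]] q by (auto simp: pts_def)
    qed
    also have "\<dots> = l * card {q\<in>pts C. card (blk p \<inter> blk q) = l}"
      using fin_pts by (simp add: sum.If_cases Int_def)
    also have "\<dots> = l * t" using nonflag[OF p C] False p by (simp add: pts_def)
    finally show ?thesis using False by (simp add: e)
  qed
qed

lemma Q_nat: "col x w \<Longrightarrow> B \<in> Lb x w \<Longrightarrow> C \<in> Lb x w \<Longrightarrow> B \<noteq> C \<Longrightarrow>
  (\<Sum>z\<in>Zb x w. cz z B * cz z C) + 2 * k * y + y * y * (card (Ub x w) - 2) = y * (r + (k - 1) * l) + (k - y) * (t * l)"
proof -
  assume c: "col x w" and B: "B \<in> Lb x w" and C: "C \<in> Lb x w" and ne: "B \<noteq> C"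
  note dB = Lb_D[OF B c] and dC = Lb_D[OF C c]
  have BU: "B \<in> Ub x w" and CU: "C \<in> Ub x w" using B C Lb_Ub by blast+
  have cyBC: "card (pts B \<inter> pts C) = y" using meet_y[of B C x] dB dC ne by simp
  have "(\<Sum>z\<in>Bs. cz z B * cz z C) = (\<Sum>z\<in>Bs. card {p\<in>pts B. I p z} * card {q\<in>pts C. I q z})"
    by (simp add: cz_set)
  also have "\<dots> = (\<Sum>p\<in>pts B. \<Sum>q\<in>pts C. card {z\<in>Bs. I p z \<and> I q z})"
    by (rule dc2[OF fin_pts fin_pts finB])
  also have "\<dots> = (\<Sum>p\<in>pts B. if p \<in> pts C then r + (k - 1) * l else t * l)"
    by (rule sum.cong[OF refl]) (use inner_sum dB dC in \<open>auto simp: pts_def\<close>)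
  also have "\<dots> = y * (r + (k - 1) * l) + (k - y) * (t * l)"
  proof -
    have "(\<Sum>p\<in>pts B. if p \<in> pts C then r + (k - 1) * l else t * l)
       = (\<Sum>p\<in>pts B \<inter> pts C. r + (k - 1) * l) + (\<Sum>p\<in>pts B - pts C. t * l)"
      using fin_pts by (simp add: sum.If_cases Int_def Diff_eq)
    moreover have "card (pts B - pts C) = k - y"
      using cyBC card_pts dB fin_pts by (simp add: card_Diff_subset_Int)
    ultimately show ?thesis using cyBC by simp
  qed
  finally have all: "(\<Sum>z\<in>Bs. cz z B * cz z C) = y * (r + (k - 1) * l) + (k - y) * (t * l)" .
  have "(\<Sum>z\<in>Bs. cz z B * cz z C) = (\<Sum>z\<in>Zb x w \<union> Ub x w. cz z B * cz z C)" by (simp only: Bs_split(1)[symmetric])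
  also have "\<dots> = (\<Sum>z\<in>Zb x w. cz z B * cz z C) + (\<Sum>z\<in>Ub x w. cz z B * cz z C)"
    by (rule sum.union_disjoint) (simp_all add: fin_Zb fin_Ub Bs_split(2))
  finally have split: "(\<Sum>z\<in>Bs. cz z B * cz z C) = (\<Sum>z\<in>Zb x w. cz z B * cz z C) + (\<Sum>z\<in>Ub x w. cz z B * cz z C)" .
  have "(\<Sum>z\<in>Ub x w. cz z B * cz z C) = 2 * k * y + y * y * (card (Ub x w) - 2)"
  proof -
    have "(\<Sum>z\<in>Ub x w. cz z B * cz z C) = cz B B * cz B C + (\<Sum>z\<in>Ub x w - {B}. cz z B * cz z C)"
      using BU fin_Ub by (simp add: sum.remove)
    also have "(\<Sum>z\<in>Ub x w - {B}. cz z B * cz z C) = cz C B * cz C C + (\<Sum>z\<in>Ub x w - {B} - {C}. cz z B * cz z C)"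
    proof -
      have C': "C \<in> Ub x w - {B}" using CU ne by auto
      have F': "finite (Ub x w - {B})" using fin_Ub by simp
      show ?thesis by (rule sum.remove[OF F' C'])
    qed
    also have "(\<Sum>z\<in>Ub x w - {B} - {C}. cz z B * cz z C) = (\<Sum>z\<in>Ub x w - {B} - {C}. y * y)"
      by (rule sum.cong[OF refl]) (use Ub_meet[OF c B] Ub_meet[OF c C] in auto)
    also have "card (Ub x w - {B} - {C}) = card (Ub x w) - 2"
      using BU CU ne fin_Ub by (simp add: card_Diff_singleton)
    moreover have "cz B C = y" "cz C B = y" using cyBC by (simp_all add: cz_def Int_commute)
    ultimately show ?thesis using cz_self dB dC by simp
  qed
  then show ?thesis using all split by simp
qed

end

context ctx begin

definition "K9r = real k * real r - real k - real y * (2 * real r - real l - 1)"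
definition "Y2r = real y * (real r + (real k - 1) * real l) + (real k - real y) * real t * real l
   - 2 * real k * real y - (real y)^2 * (2 * real r - real l - 2)"
definition "EQ3r \<longleftrightarrow> (real b - 2 * real r + real l) * (real l * real y * K9r + real l * (real l - 1) * Y2r) = (real l)^2 * K9r^2"

lemma Ub_ge: "col x w \<Longrightarrow> B \<in> Lb x w \<Longrightarrow> C \<in> Lb x w \<Longrightarrow> B \<noteq> C \<Longrightarrow> card (Ub x w) \<ge> 2"
proof -
  assume "col x w" "B \<in> Lb x w" "C \<in> Lb x w" "B \<noteq> C"
  then have "{B, C} \<subseteq> Ub x w" using Lb_Ub by blast
  then have "card {B, C} \<le> card (Ub x w)" by (rule card_mono[OF fin_Ub])
  then show ?thesis using \<open>B \<noteq> C\<close> by simp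
qed

lemma card_Ub_r: "col x w \<Longrightarrow> real (card (Ub x w)) = 2 * real r - real l"
proof -
  assume c: "col x w"
  have "real (card (Ub x w) + l) = real (2 * r)" using card_Ub[OF c] by simp
  then show ?thesis by simp
qed

lemma card_Zb_r: "col x w \<Longrightarrow> real (card (Zb x w)) = real b - 2 * real r + real l"
proof -
  assume c: "col x w"
  have "real (card (Zb x w) + card (Ub x w)) = real b" using card_Zb[OF c] by simp
  then show ?thesis using card_Ub_r[OF c] by simp
qed

lemma K9_r: "col x w \<Longrightarrow> B \<in> Lb x w \<Longrightarrow> (\<Sum>z\<in>Zb x w. real (cz z B)) = K9r"
proof -
  assume c: "col x w" and B: "B \<in> Lb x w"
  have U1: "card (Ub x w) \<ge> 1" using B Lb_Ub fin_Ub by (metis One_nat_def Suc_leI card_gt_0_iff empty_iff subsetD)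
  have "real ((\<Sum>z\<in>Zb x w. cz z B) + k + y * (card (Ub x w) - 1)) = real (k * r)" using K9_nat[OF c B] by simp
  then have "(\<Sum>z\<in>Zb x w. real (cz z B)) + real k + real y * (real (card (Ub x w)) - 1) = real k * real r"
    using U1 by (simp add: of_nat_diff)
  then show ?thesis unfolding K9r_def card_Ub_r[OF c] by (simp add: algebra_simps)
qed

lemma Q_r: "col x w \<Longrightarrow> B \<in> Lb x w \<Longrightarrow> C \<in> Lb x w \<Longrightarrow> B \<noteq> C \<Longrightarrow> (\<Sum>z\<in>Zb x w. real (cz z B) * real (cz z C)) = Y2r"
proof -
  assume c: "col x w" and B: "B \<in> Lb x w" and C: "C \<in> Lb x w" and ne: "B \<noteq> C"
  have U2: "card (Ub x w) \<ge> 2" by (rule Ub_ge[OF c B C ne])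
  have ky: "y \<le> k" by (rule y_le_k)
  have k1: "1 \<le> k" using k_ge by simp
  have "real ((\<Sum>z\<in>Zb x w. cz z B * cz z C) + 2 * k * y + y * y * (card (Ub x w) - 2))
      = real (y * (r + (k - 1) * l) + (k - y) * (t * l))" using Q_nat[OF c B C ne] by simp
  then have "(\<Sum>z\<in>Zb x w. real (cz z B) * real (cz z C)) + 2 * real k * real y + real y * real y * (real (card (Ub x w)) - 2)
      = real y * (real r + (real k - 1) * real l) + (real k - real y) * (real t * real l)"
    using U2 ky k1 by (simp add: of_nat_diff)
  then show ?thesis unfolding Y2r_def card_Ub_r[OF c] by (simp add: algebra_simps power2_eq_square)
qed

lemma Zb_ne_B: "col x w \<Longrightarrow> z \<in> Zb x w \<Longrightarrow> B \<in> Lb x w \<Longrightarrow> z \<noteq> B \<and> z \<in> Bs \<and> B \<in> Bs"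
  by (auto simp: Zb_def Lb_def blk_def)

lemma F_eq: "col x w \<Longrightarrow> z \<in> Zb x w \<Longrightarrow> (\<Sum>B\<in>Lb x w. cz z B) = y * card (Lb x w \<inter> G2s z)"
proof -
  assume c: "col x w" and z: "z \<in> Zb x w"
  have "(\<Sum>B\<in>Lb x w. cz z B) = (\<Sum>B\<in>Lb x w. if B \<in> G2s z then y else 0)"
    by (rule sum.cong[OF refl]) (use cz_vals Zb_ne_B[OF c z] in blast)
  also have "\<dots> = y * card (Lb x w \<inter> G2s z)" using fin_Lb by (simp add: sum.If_cases)
  finally show ?thesis .
qed

lemma cz_sq: "col x w \<Longrightarrow> z \<in> Zb x w \<Longrightarrow> B \<in> Lb x w \<Longrightarrow> real (cz z B) * real (cz z B) = real y * real (cz z B)"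
  using cz_vals Zb_ne_B by (cases "B \<in> G2s z") auto

lemma H3_sums:
  assumes c: "col x w"
  shows "(\<Sum>z\<in>Zb x w. real (\<Sum>B\<in>Lb x w. cz z B)) = real l * K9r"
    and "(\<Sum>z\<in>Zb x w. (real (\<Sum>B\<in>Lb x w. cz z B))^2) = real l * (real y * K9r + (real l - 1) * Y2r)"
proof -
  show "(\<Sum>z\<in>Zb x w. real (\<Sum>B\<in>Lb x w. cz z B)) = real l * K9r"
  proof -
    have "(\<Sum>z\<in>Zb x w. real (\<Sum>B\<in>Lb x w. cz z B)) = (\<Sum>z\<in>Zb x w. \<Sum>B\<in>Lb x w. real (cz z B))" by simp
    also have "\<dots> = (\<Sum>B\<in>Lb x w. \<Sum>z\<in>Zb x w. real (cz z B))" by (rule sum.swap)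
    also have "\<dots> = (\<Sum>B\<in>Lb x w. K9r)" by (rule sum.cong[OF refl]) (rule K9_r[OF c])
    finally show ?thesis using card_Lb[OF c] by simp
  qed
  show "(\<Sum>z\<in>Zb x w. (real (\<Sum>B\<in>Lb x w. cz z B))^2) = real l * (real y * K9r + (real l - 1) * Y2r)"
  proof -
    have "(\<Sum>z\<in>Zb x w. (real (\<Sum>B\<in>Lb x w. cz z B))^2)
        = (\<Sum>z\<in>Zb x w. \<Sum>B\<in>Lb x w. \<Sum>C\<in>Lb x w. real (cz z B) * real (cz z C))"
      by (simp add: power2_eq_square sum_product)
    also have "\<dots> = (\<Sum>B\<in>Lb x w. \<Sum>z\<in>Zb x w. \<Sum>C\<in>Lb x w. real (cz z B) * real (cz z C))" by (rule sum.swap)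
    also have "\<dots> = (\<Sum>B\<in>Lb x w. \<Sum>C\<in>Lb x w. \<Sum>z\<in>Zb x w. real (cz z B) * real (cz z C))"
      by (rule sum.cong[OF refl]) (rule sum.swap)
    also have "\<dots> = (\<Sum>B\<in>Lb x w. real y * K9r + (real l - 1) * Y2r)"
    proof (rule sum.cong[OF refl])
      fix B assume B: "B \<in> Lb x w"
      have "(\<Sum>C\<in>Lb x w. \<Sum>z\<in>Zb x w. real (cz z B) * real (cz z C))
         = (\<Sum>z\<in>Zb x w. real (cz z B) * real (cz z B)) + (\<Sum>C\<in>Lb x w - {B}. \<Sum>z\<in>Zb x w. real (cz z B) * real (cz z C))"
        using B fin_Lb by (simp add: sum.remove)
      also have "(\<Sum>z\<in>Zb x w. real (cz z B) * real (cz z B)) = real y * K9r"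
      proof -
        have "(\<Sum>z\<in>Zb x w. real (cz z B) * real (cz z B)) = (\<Sum>z\<in>Zb x w. real y * real (cz z B))"
          by (rule sum.cong[OF refl]) (rule cz_sq[OF c _ B])
        also have "\<dots> = real y * (\<Sum>z\<in>Zb x w. real (cz z B))" by (rule sum_distrib_left[symmetric])
        also have "\<dots> = real y * K9r" using K9_r[OF c B] by simp
        finally show ?thesis .
      qed
      also have "(\<Sum>C\<in>Lb x w - {B}. \<Sum>z\<in>Zb x w. real (cz z B) * real (cz z C)) = (\<Sum>C\<in>Lb x w - {B}. Y2r)"
        by (rule sum.cong[OF refl]) (use Q_r[OF c B] in auto)
      also have "\<dots> = (real l - 1) * Y2r" using B card_Lb[OF c] fin_Lb l_ge2 by (simp add: card_Diff_singleton of_nat_diff)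
      finally show "(\<Sum>C\<in>Lb x w. \<Sum>z\<in>Zb x w. real (cz z B) * real (cz z C)) = real y * K9r + (real l - 1) * Y2r" .
    qed
    finally show ?thesis using card_Lb[OF c] by simp
  qed
qed

lemma H3_pair:
  assumes c: "col x w"
  shows "(\<exists>cc. \<forall>z\<in>Zb x w. card (Lb x w \<inter> G2s z) = cc) \<longleftrightarrow> EQ3r"
proof -
  define f where "f z = real (\<Sum>B\<in>Lb x w. cz z B)" for z
  have fz: "f z = real y * real (card (Lb x w \<inter> G2s z))" if "z \<in> Zb x w" for z
    unfolding f_def using F_eq[OF c that] by simp
  have yp: "real y \<noteq> 0" using y1 by simp
  have "(\<exists>cc. \<forall>z\<in>Zb x w. card (Lb x w \<inter> G2s z) = cc) \<longleftrightarrow> (\<exists>cc. \<forall>z\<in>Zb x w. real (card (Lb x w \<inter> G2s z)) = cc)"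
    by (rule ex_nat_real)
  also have "\<dots> \<longleftrightarrow> (\<exists>cc. \<forall>z\<in>Zb x w. f z = cc)"
  proof
    assume "\<exists>cc. \<forall>z\<in>Zb x w. real (card (Lb x w \<inter> G2s z)) = cc"
    then obtain cc where "\<forall>z\<in>Zb x w. real (card (Lb x w \<inter> G2s z)) = cc" by blast
    then have "\<forall>z\<in>Zb x w. f z = real y * cc" using fz by auto
    then show "\<exists>cc. \<forall>z\<in>Zb x w. f z = cc" by blast
  next
    assume "\<exists>cc. \<forall>z\<in>Zb x w. f z = cc"
    then obtain cc where "\<forall>z\<in>Zb x w. f z = cc" by blast
    then have "\<forall>z\<in>Zb x w. real (card (Lb x w \<inter> G2s z)) = cc / real y" using fz yp by (auto simp: field_simps)
    then show "\<exists>cc. \<forall>z\<in>Zb x w. real (card (Lb x w \<inter> G2s z)) = cc" by blast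
  qed
  also have "\<dots> \<longleftrightarrow> real (card (Zb x w)) * (\<Sum>z\<in>Zb x w. (f z)^2) = (\<Sum>z\<in>Zb x w. f z)^2"
    by (rule var_const[OF fin_Zb])
  also have "\<dots> \<longleftrightarrow> EQ3r"
    unfolding f_def H3_sums[OF c] card_Zb_r[OF c] EQ3r_def by (simp add: algebra_simps power2_eq_square)
  finally show ?thesis .
qed

lemma H3_val:
  assumes c: "col x w" and e: "EQ3r" and z: "z \<in> Zb x w"
  shows "real (card (Lb x w \<inter> G2s z)) = real l * K9r / ((real b - 2 * real r + real l) * real y)"
proof -
  define f where "f z = real (\<Sum>B\<in>Lb x w. cz z B)" for z
  have fz: "f z = real y * real (card (Lb x w \<inter> G2s z))" if "z \<in> Zb x w" for z
    unfolding f_def using F_eq[OF c that] by simp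
  obtain cc where cc: "\<forall>z\<in>Zb x w. card (Lb x w \<inter> G2s z) = cc" using H3_pair[OF c] e by blast
  then have "\<forall>z\<in>Zb x w. f z = real y * real cc" using fz by simp
  then have "f z * real (card (Zb x w)) = (\<Sum>z\<in>Zb x w. f z)" using z by simp
  then have eq1: "real y * real (card (Lb x w \<inter> G2s z)) * (real b - 2 * real r + real l) = real l * K9r"
    using fz[OF z] H3_sums(1)[OF c] card_Zb_r[OF c] unfolding f_def by simp
  have "card (Zb x w) > 0" using z fin_Zb card_gt_0_iff by blast
  then have p1: "real b - 2 * real r + real l > 0" using card_Zb_r[OF c] by (metis of_nat_0_less_iff)
  have p2: "real y > 0" using y1 by simp
  have D: "(real b - 2 * real r + real l) * real y \<noteq> 0" using p1 p2 by simp
  have "((real b - 2 * real r + real l) * real y) * real (card (Lb x w \<inter> G2s z)) = real l * K9r"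
    using eq1 by algebra
  then show ?thesis using D by (simp add: eq_divide_eq mult.commute)
qed

definition "H3set \<longleftrightarrow> (\<exists>c. \<forall>x\<in>P. \<forall>w. col x w \<longrightarrow> (\<forall>z\<in>Bs. \<not> I x z \<and> \<not> I w z \<longrightarrow> card (blk x \<inter> blk w \<inter> G2s z) = c))"

lemma H3_iff: "H3set \<longleftrightarrow> EQ3r"
proof
  assume h: "H3set"
  obtain x w where c: "col x w" using ex_col by blast
  obtain cc where cc: "\<forall>x\<in>P. \<forall>w. col x w \<longrightarrow> (\<forall>z\<in>Bs. \<not> I x z \<and> \<not> I w z \<longrightarrow> card (blk x \<inter> blk w \<inter> G2s z) = cc)"
    using h unfolding H3set_def by blast
  have "\<forall>z\<in>Zb x w. card (Lb x w \<inter> G2s z) = cc" using cc c colD[OF c] unfolding Zb_def Lb_def by auto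
  then show "EQ3r" using H3_pair[OF c] by blast
next
  assume e: "EQ3r"
  define c0 where "c0 = real l * K9r / ((real b - 2 * real r + real l) * real y)"
  have "\<forall>x\<in>P. \<forall>w. col x w \<longrightarrow> (\<forall>z\<in>Bs. \<not> I x z \<and> \<not> I w z \<longrightarrow> card (blk x \<inter> blk w \<inter> G2s z) = nat \<lfloor>c0\<rfloor>)"
  proof (intro ballI allI impI)
    fix x w z assume "x \<in> P" "col x w" "z \<in> Bs" "\<not> I x z \<and> \<not> I w z"
    then have "real (card (Lb x w \<inter> G2s z)) = c0" unfolding c0_def using H3_val[OF _ e] by (simp add: Zb_def)
    then show "card (blk x \<inter> blk w \<inter> G2s z) = nat \<lfloor>c0\<rfloor>" unfolding Lb_def by (rule nat_of_real_val)
  qed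
  then show "H3set" unfolding H3set_def by blast
qed

end

context ctx begin

definition Ci :: "nat \<Rightarrow> bool" where
  "Ci i \<longleftrightarrow> (\<exists>c. \<forall>x\<in>Inl ` P. \<forall>y\<in>Gamma E 2 x. \<forall>z\<in>Gamma E i x \<inter> Gamma E i y.
            card (Gamma E 1 x \<inter> Gamma E 1 y \<inter> Gamma E (i - 1) z) = c)"

lemma inr_int3: "card (Inr ` A \<inter> Inr ` B \<inter> Inr ` C) = card (A \<inter> B \<inter> C)"
proof -
  have eq: "Inr ` A \<inter> Inr ` B \<inter> Inr ` C = Inr ` (A \<inter> B \<inter> C)" by auto
  show ?thesis unfolding eq by (rule card_image) (simp add: inj_on_def)
qed

lemma C1: "Ci 1"
proof -
  have "\<forall>x\<in>Inl ` P. \<forall>y\<in>Gamma E 2 x. \<forall>z\<in>Gamma E 1 x \<inter> Gamma E 1 y.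
            card (Gamma E 1 x \<inter> Gamma E 1 y \<inter> Gamma E (1 - 1) z) = 1"
  proof (intro ballI)
    fix x y z assume "x \<in> Inl ` P" "y \<in> Gamma E 2 x" "z \<in> Gamma E 1 x \<inter> Gamma E 1 y"
    then have "Gamma E 1 x \<inter> Gamma E 1 y \<inter> Gamma E (1 - 1) z = {z}" by (auto simp: G0)
    then show "card (Gamma E 1 x \<inter> Gamma E 1 y \<inter> Gamma E (1 - 1) z) = 1" by simp
  qed
  then show ?thesis unfolding Ci_def by blast
qed

lemma C2: "Ci 2 \<longleftrightarrow> H2set"
proof -
  have key: "(\<forall>x\<in>Inl ` P. \<forall>y\<in>Gamma E 2 x. \<forall>z\<in>Gamma E 2 x \<inter> Gamma E 2 y.
            card (Gamma E 1 x \<inter> Gamma E 1 y \<inter> Gamma E (2 - 1) z) = c)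
     \<longleftrightarrow> (\<forall>x\<in>P. \<forall>w. col x w \<longrightarrow> (\<forall>z. col x z \<and> col w z \<longrightarrow> card (blk x \<inter> blk w \<inter> blk z) = c))" for c
  proof
    assume h: "\<forall>x\<in>Inl ` P. \<forall>y\<in>Gamma E 2 x. \<forall>z\<in>Gamma E 2 x \<inter> Gamma E 2 y.
            card (Gamma E 1 x \<inter> Gamma E 1 y \<inter> Gamma E (2 - 1) z) = c"
    show "\<forall>x\<in>P. \<forall>w. col x w \<longrightarrow> (\<forall>z. col x z \<and> col w z \<longrightarrow> card (blk x \<inter> blk w \<inter> blk z) = c)"
    proof (intro ballI allI impI)
      fix x w z assume x: "x \<in> P" and cw: "col x w" and cz: "col x z \<and> col w z"
      have wP: "w \<in> P" and zP: "z \<in> P" using colD cw cz by auto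
      have "Inl w \<in> Gamma E 2 (Inl x)" using G2p[OF x] cw by auto
      moreover have "Inl z \<in> Gamma E 2 (Inl x) \<inter> Gamma E 2 (Inl w)" using G2p[OF x] G2p[OF wP] cz by auto
      ultimately have "card (Gamma E 1 (Inl x) \<inter> Gamma E 1 (Inl w) \<inter> Gamma E (2 - 1) (Inl z)) = c"
        using h x by blast
      then show "card (blk x \<inter> blk w \<inter> blk z) = c" using G1p[OF x] G1p[OF wP] G1p[OF zP] by (simp add: inr_int3)
    qed
  next
    assume h: "\<forall>x\<in>P. \<forall>w. col x w \<longrightarrow> (\<forall>z. col x z \<and> col w z \<longrightarrow> card (blk x \<inter> blk w \<inter> blk z) = c)"
    show "\<forall>x\<in>Inl ` P. \<forall>y\<in>Gamma E 2 x. \<forall>z\<in>Gamma E 2 x \<inter> Gamma E 2 y.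
            card (Gamma E 1 x \<inter> Gamma E 1 y \<inter> Gamma E (2 - 1) z) = c"
    proof (intro ballI)
      fix X Y Z assume X: "X \<in> Inl ` P" and Y: "Y \<in> Gamma E 2 X" and Z: "Z \<in> Gamma E 2 X \<inter> Gamma E 2 Y"
      obtain x where x: "x \<in> P" "X = Inl x" using X by blast
      obtain w where w: "col x w" "Y = Inl w" using Y G2p[OF x(1)] x(2) by auto
      have wP: "w \<in> P" using colD[OF w(1)] by simp
      obtain z where z: "col x z" "col w z" "Z = Inl z" using Z G2p[OF x(1)] G2p[OF wP] x(2) w(2) by auto
      have zP: "z \<in> P" using colD[OF z(1)] by simp
      have "card (blk x \<inter> blk w \<inter> blk z) = c" using h x(1) w(1) z by blast
      then show "card (Gamma E 1 X \<inter> Gamma E 1 Y \<inter> Gamma E (2 - 1) Z) = c"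
        using G1p[OF x(1)] G1p[OF wP] G1p[OF zP] x(2) w(2) z(3) by (simp add: inr_int3)
    qed
  qed
  show ?thesis unfolding Ci_def H2set_def key ..
qed

lemma C3: "t \<ge> 1 \<Longrightarrow> Ci 3 \<longleftrightarrow> H3set"
proof -
  assume t1: "t \<ge> 1"
  have key: "(\<forall>x\<in>Inl ` P. \<forall>y\<in>Gamma E 2 x. \<forall>z\<in>Gamma E 3 x \<inter> Gamma E 3 y.
            card (Gamma E 1 x \<inter> Gamma E 1 y \<inter> Gamma E (3 - 1) z) = c)
     \<longleftrightarrow> (\<forall>x\<in>P. \<forall>w. col x w \<longrightarrow> (\<forall>z\<in>Bs. \<not> I x z \<and> \<not> I w z \<longrightarrow> card (blk x \<inter> blk w \<inter> G2s z) = c))" for c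
  proof
    assume h: "\<forall>x\<in>Inl ` P. \<forall>y\<in>Gamma E 2 x. \<forall>z\<in>Gamma E 3 x \<inter> Gamma E 3 y.
            card (Gamma E 1 x \<inter> Gamma E 1 y \<inter> Gamma E (3 - 1) z) = c"
    show "\<forall>x\<in>P. \<forall>w. col x w \<longrightarrow> (\<forall>z\<in>Bs. \<not> I x z \<and> \<not> I w z \<longrightarrow> card (blk x \<inter> blk w \<inter> G2s z) = c)"
    proof (intro ballI allI impI)
      fix x w z assume x: "x \<in> P" and cw: "col x w" and zB: "z \<in> Bs" and nz: "\<not> I x z \<and> \<not> I w z"
      have wP: "w \<in> P" using colD cw by auto
      have "Inl w \<in> Gamma E 2 (Inl x)" using G2p[OF x] cw by auto
      moreover have "Inr z \<in> Gamma E 3 (Inl x) \<inter> Gamma E 3 (Inl w)" using G3p[OF t1 x] G3p[OF t1 wP] zB nz by auto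
      ultimately have "card (Gamma E 1 (Inl x) \<inter> Gamma E 1 (Inl w) \<inter> Gamma E (3 - 1) (Inr z)) = c"
        using h x by blast
      moreover have "Gamma E (3 - 1) (Inr z) = Inr ` G2s z" using G2b[OF zB] by (simp add: G2s_def)
      ultimately show "card (blk x \<inter> blk w \<inter> G2s z) = c" using G1p[OF x] G1p[OF wP] by (simp add: inr_int3)
    qed
  next
    assume h: "\<forall>x\<in>P. \<forall>w. col x w \<longrightarrow> (\<forall>z\<in>Bs. \<not> I x z \<and> \<not> I w z \<longrightarrow> card (blk x \<inter> blk w \<inter> G2s z) = c)"
    show "\<forall>x\<in>Inl ` P. \<forall>y\<in>Gamma E 2 x. \<forall>z\<in>Gamma E 3 x \<inter> Gamma E 3 y.
            card (Gamma E 1 x \<inter> Gamma E 1 y \<inter> Gamma E (3 - 1) z) = c"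
    proof (intro ballI)
      fix X Y Z assume X: "X \<in> Inl ` P" and Y: "Y \<in> Gamma E 2 X" and Z: "Z \<in> Gamma E 3 X \<inter> Gamma E 3 Y"
      obtain x where x: "x \<in> P" "X = Inl x" using X by blast
      obtain w where w: "col x w" "Y = Inl w" using Y G2p[OF x(1)] x(2) by auto
      have wP: "w \<in> P" using colD[OF w(1)] by simp
      obtain z where z: "z \<in> Bs" "\<not> I x z" "\<not> I w z" "Z = Inr z"
        using Z G3p[OF t1 x(1)] G3p[OF t1 wP] x(2) w(2) by auto
      have "card (blk x \<inter> blk w \<inter> G2s z) = c" using h x(1) w(1) z by blast
      moreover have "Gamma E (3 - 1) (Inr z) = Inr ` G2s z" using G2b[OF z(1)] by (simp add: G2s_def)
      ultimately show "card (Gamma E 1 X \<inter> Gamma E 1 Y \<inter> Gamma E (3 - 1) Z) = c"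
        using G1p[OF x(1)] G1p[OF wP] x(2) w(2) z(4) by (simp add: inr_int3)
    qed
  qed
  show ?thesis unfolding Ci_def H3set_def key ..
qed

lemma hom_iff: "t \<ge> 1 \<Longrightarrow> two_Y_homogeneous E V (Inl ` P) \<longleftrightarrow> H2set \<and> (t < k \<longrightarrow> H3set)"
proof -
  assume t1: "t \<ge> 1"
  define D0 where "D0 = (if t < k then 4 else (3::nat))"
  have ecc: "\<forall>x\<in>Inl ` P. has_ecc E V x D0"
  proof
    fix X :: "'a + 'b" assume "X \<in> Inl ` P"
    then obtain x where x: "x \<in> P" "X = Inl x" by blast
    show "has_ecc E V X D0"
    proof (cases "t < k")
      case True then show ?thesis using ecc4[OF t1 True x(1)] x(2) by (simp add: D0_def)
    next
      case False then have "t = k" using t_le_k by simp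
      then show ?thesis using ecc3[OF _ x(1)] x(2) False by (simp add: D0_def)
    qed
  qed
  have D03: "D0 \<ge> 3" by (simp add: D0_def)
  obtain x0 where x0: "x0 \<in> P" using P_ne by blast
  have "two_Y_homogeneous E V (Inl ` P) \<longleftrightarrow> (\<forall>i\<in>{1..D0-1}. Ci i)"
  proof
    assume "two_Y_homogeneous E V (Inl ` P)"
    then obtain D where D: "D \<ge> 3" "\<forall>x\<in>Inl ` P. has_ecc E V x D" "\<forall>i\<in>{1..D-1}. Ci i"
      unfolding two_Y_homogeneous_def Ci_def by blast
    have "D = D0" using ecc_unique D(2) ecc x0 by blast
    then show "\<forall>i\<in>{1..D0-1}. Ci i" using D(3) by simp
  next
    assume "\<forall>i\<in>{1..D0-1}. Ci i"
    then show "two_Y_homogeneous E V (Inl ` P)" unfolding two_Y_homogeneous_def Ci_def using ecc D03 by blast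
  qed
  also have "\<dots> \<longleftrightarrow> H2set \<and> (t < k \<longrightarrow> H3set)"
  proof (cases "t < k")
    case True
    have "{1..D0-1} = {1, 2, 3::nat}" using True by (auto simp: D0_def)
    then show ?thesis using True C1 C2 C3[OF t1] by simp
  next
    case False
    have "{1..D0-1} = {1, 2::nat}" using False by (auto simp: D0_def)
    then show ?thesis using False C1 C2 by simp
  qed
  finally show ?thesis .
qed

end

context ctx begin

lemma final_ctx:
  "two_Y_homogeneous E V (Inl ` P) \<longleftrightarrow>
    (real k = (real y - 1) * (real r - real l) * (real t - 1) / (real l * (real t - real y)) + 2
     \<and> real t = (real k - 1) * (real r * (real y - 1) - real l * (real k - real y - 1))
                 / (real l * (real y - 1)))"
proof -
  have R1': "(real r - 1) * (real y - 1) = (real k - 1) * (real l - 1)" by (rule R1)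
  have lg: "real l > 1" using l_ge2 by simp
  have yg: "real y > 1" using y1 by simp
  have y2: "real y \<ge> 2" using y1 by simp
  have kg: "real k > 1" using k_ge by simp
  show ?thesis
  proof (cases "t = 0")
    case t0: True
    have nl: "\<not> two_Y_homogeneous E V (Inl ` P)"
    proof
      assume "two_Y_homogeneous E V (Inl ` P)"
      then obtain D where "\<forall>x\<in>Inl ` P. has_ecc E V x D" unfolding two_Y_homogeneous_def by blast
      moreover obtain x0 where x0: "x0 \<in> P" using P_ne by blast
      ultimately have "has_ecc E V (Inl x0) D" by blast
      then show False using disconn[OF t0 x0] by simp
    qed
    have nr: "\<not> (real k = (real y - 1) * (real r - real l) * (real t - 1) / (real l * (real t - real y)) + 2
     \<and> real t = (real k - 1) * (real r * (real y - 1) - real l * (real k - real y - 1))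
                 / (real l * (real y - 1)))"
      using alg_t0[OF yg lg kg R1'] t0 by simp
    show ?thesis using nl nr by simp
  next
    case False
    then have t1: "t \<ge> 1" by simp
    have kyn: "y < k" by (rule y_lt_k[OF t1])
    have ky: "real k > real y" using kyn by simp
    have ky1: "real k \<ge> real y + 1" using kyn by simp
    have k3: "real k \<ge> 3" using kyn y1 by simp
    define M where "M = (real l - 1) * (real y - 2) + real k - 2"
    have Mp: "M > 0"
    proof -
      have "(real l - 1) * (real y - 2) \<ge> 0" using lg y2 by simp
      then show ?thesis unfolding M_def using k3 by simp
    qed
    have L: "two_Y_homogeneous E V (Inl ` P) \<longleftrightarrow> EQ2r \<and> (t < k \<longrightarrow> EQ3r)"
      using hom_iff[OF t1] H2_iff[OF t1] H3_iff by simp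
    have E2: "EQ2r \<longleftrightarrow> real t * M = real k * real y * real l - real k * real l + real k - real y * real l - real y"
      unfolding EQ2r_def M_def using alg_H2[OF yg lg ky R1'] by simp
    have F1: "(real k = (real y - 1) * (real r - real l) * (real t - 1) / (real l * (real t - real y)) + 2)
       \<longleftrightarrow> real t * M = real k * real y * real l - real k * real l + real k - real y * real l - real y"
      unfolding M_def using alg_F1[OF y2 lg ky R1'] by simp
    show ?thesis
    proof (cases "real t * M = real k * real y * real l - real k * real l + real k - real y * real l - real y")
      case False
      then show ?thesis using L E2 F1 by simp
    next
      case hT: True
      have hT': "real t * ((real l - 1) * (real y - 2) + real k - 2) = real k * real y * real l - real k * real l + real k - real y * real l - real y"
        using hT unfolding M_def .
      have M0: "(real l - 1) * (real y - 2) + real k - 2 \<noteq> 0" using Mp unfolding M_def by simp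
      have F2: "(real t = (real k - 1) * (real r * (real y - 1) - real l * (real k - real y - 1)) / (real l * (real y - 1)))
        \<longleftrightarrow> (real k - real y) * (real k - real l - real y) * (real k - real l - 1) = 0"
        by (rule alg_F2[OF yg lg R1' hT' M0])
      have kt: "(real k - real t) * M = (real k - real y) * (real k - real l - 1)"
        using hT unfolding M_def by algebra
      show ?thesis
      proof (cases "t < k")
        case False
        then have tk: "t = k" using t_le_k by simp
        then have "(real k - real y) * (real k - real l - 1) = 0" using kt by simp
        moreover have "(real k - real y) * (real k - real l - real y) * (real k - real l - 1)
            = ((real k - real y) * (real k - real l - 1)) * (real k - real l - real y)" by (simp only: mult_ac)
        ultimately have zz: "(real k - real y) * (real k - real l - real y) * (real k - real l - 1) = 0" by (simp only: mult_zero_left)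
        have lhs: "two_Y_homogeneous E V (Inl ` P)" using L E2 hT False by blast
        have f1: "real k = (real y - 1) * (real r - real l) * (real t - 1) / (real l * (real t - real y)) + 2"
          using F1 hT by blast
        have f2: "real t = (real k - 1) * (real r * (real y - 1) - real l * (real k - real y - 1)) / (real l * (real y - 1))"
          using F2 zz by blast
        show ?thesis using lhs f1 f2 by blast
      next
        case True
        have "(real k - real t) * M > 0" using True Mp by simp
        then have "(real k - real y) * (real k - real l - 1) > 0" using kt by simp
        then have kl1: "real k - real l - 1 > 0" using ky by (simp add: zero_less_mult_iff)
        have yy: "real k * real y - (real y)^2 - real l > 0"
        proof -
          have "(real y - 1) * (real k - real y - 1) \<ge> 0" using yg ky1 by simp
          then have "real y * (real k - real y) \<ge> real k - 1" by (simp add: algebra_simps)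
          then show ?thesis using kl1 by (simp add: algebra_simps power2_eq_square)
        qed
        have tp: "real t > 0" using t1 by simp
        have E3: "EQ3r \<longleftrightarrow> (real k - real l - real y) * (real k - real l - 1) * (real k * real y - (real y)^2 - real l) = 0"
          unfolding EQ3r_def K9r_def Y2r_def using alg_caseB[OF yg lg ky tp R1' hT' b_rel M0] by simp
        have "EQ3r \<longleftrightarrow> real k - real l - real y = 0" using E3 kl1 yy by simp
        moreover have "(real k - real y) * (real k - real l - real y) * (real k - real l - 1) = 0 \<longleftrightarrow> real k - real l - real y = 0"
          using ky kl1 by simp
        ultimately have e32: "EQ3r \<longleftrightarrow> (real t = (real k - 1) * (real r * (real y - 1) - real l * (real k - real y - 1)) / (real l * (real y - 1)))"
          using F2 by blast
        have "two_Y_homogeneous E V (Inl ` P) \<longleftrightarrow> EQ3r" using L E2 hT True by blast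
        then show ?thesis using e32 F1 hT by blast
      qed
    qed
  qed
qed

end

theorem proposition4p10:
  fixes P :: "'a set" and Bs :: "'b set" and I :: "'a \<Rightarrow> 'b \<Rightarrow> bool"
    and v b r k l1 t y :: nat
  assumes "spbibd P Bs I v b r k l1 0 (k - 1) t"
    and "quasi_symmetric P Bs I 0 y"
    and "y > 1"
  shows "two_Y_homogeneous (inc_edges P Bs I) (inc_vertices P Bs) (Inl ` P) \<longleftrightarrow>
    (real k = (real y - 1) * (real r - real l1) * (real t - 1) / (real l1 * (real t - real y)) + 2
     \<and> real t = (real k - 1) * (real r * (real y - 1) - real l1 * (real k - real y - 1))
                 / (real l1 * (real y - 1)))"
proof -
  interpret ctx P Bs I v b r k l1 t y using assms by unfold_locales
  show ?thesis by (rule final_ctx)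
qed


end
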